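(* In the 2-sided device-independent (2SDI) setting where Alice measures the qubit observables $A_0=\sigma_x$, $A_1=\sigma_y$ and Bob and Charlie are black boxes, the Svetlichny family $P^V_{SvF}$ ($0<V\le1$) demonstrates genuine tripartite steering if and only if $V>\frac1{\sqrt2}$.
   Context: Outcomes and settings: $a,b,c,x,y,z\in\{0,1\}$. For a qubit observable $O$ with eigenvalues $\pm1$, the measurement has projectors $M_0=(\mathbb 1+O)/2$, $M_1=(\mathbb 1-O)/2$; $M^A_{a|x}$ denotes the projectors of $A_x$. Svetlichny family: $P^V_{SvF}(abc|xyz)=\frac{2+(-1)^{a\oplus b\oplus c\oplus xy\oplus yz\oplus xz}\sqrt2\,V}{16}$. Genuine tripartite steering in the 2SDI scenario: $P$ demonstrates it iff there is no finite $d$, biseparable state $\rho^{ABC}=\sum_\lambda p_\lambda\rho^\lambda_A\otimes\rho^\lambda_{BC}+\sum_\lambda q_\lambda\rho^\lambda_{AC}\otimes\rho^\lambda_B+\sum_\lambda r_\lambda\rho^\lambda_{AB}\otimes\rho^\lambda_C$ on $\mathbb C^2\otimes\mathbb C^d\otimes\mathbb C^d$ (weights nonnegative summing to 1), and POVMs $\{N_{b|y}\}_b$, $\{N'_{c|z}\}_c$ on $\mathbb C^d$ such that $P(abc|xyz)=\mathrm{Tr}[(M^A_{a|x}\otimes N_{b|y}\otimes N'_{c|z})\rho^{ABC}]$. *)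

theory Defs
  imports Complex_Main "Jordan_Normal_Form.Matrix"
begin

definition mtrace :: "complex mat \<Rightarrow> complex" where
  "mtrace M = (\<Sum>i<dim_row M. M $$ (i, i))"

definition psd :: "nat \<Rightarrow> complex mat \<Rightarrow> bool" where
  "psd n M \<longleftrightarrow> M \<in> carrier_mat n n \<and>
     (\<forall>v \<in> carrier_vec n.
        let q = (\<Sum>i<n. cnj (v $ i) * (M *\<^sub>v v) $ i) in Im q = 0 \<and> Re q \<ge> 0)"

definition density :: "nat \<Rightarrow> complex mat \<Rightarrow> bool" where
  "density n \<rho> \<longleftrightarrow> psd n \<rho> \<and> mtrace \<rho> = 1"

definition kron :: "complex mat \<Rightarrow> complex mat \<Rightarrow> complex mat" where
  "kron A B = mat (dim_row A * dim_row B) (dim_col A * dim_col B)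
     (\<lambda>(i, j). A $$ (i div dim_row B, j div dim_col B) * B $$ (i mod dim_row B, j mod dim_col B))"

definition povm2 :: "nat \<Rightarrow> (nat \<Rightarrow> complex mat) \<Rightarrow> bool" where
  "povm2 d N \<longleftrightarrow> psd d (N 0) \<and> psd d (N 1) \<and> N 0 + N 1 = 1\<^sub>m d"

text \<open>Index i < 2*d*d corresponds to (a,b,c) with i = a*d*d + b*d + c.\<close>
definition idxA :: "nat \<Rightarrow> nat \<Rightarrow> nat" where "idxA d i = i div (d * d)"
definition idxB :: "nat \<Rightarrow> nat \<Rightarrow> nat" where "idxB d i = (i div d) mod d"
definition idxC :: "nat \<Rightarrow> nat \<Rightarrow> nat" where "idxC d i = i mod d"

text \<open>rho_AC \<otimes> rho_B, embedded in the A,B,C ordering (rho_AC acts on C^2 \<otimes> C^d with ordering A,C).\<close>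
definition prod_AC_B :: "nat \<Rightarrow> complex mat \<Rightarrow> complex mat \<Rightarrow> complex mat" where
  "prod_AC_B d X Y = mat (2 * d * d) (2 * d * d)
     (\<lambda>(i, j). X $$ (idxA d i * d + idxC d i, idxA d j * d + idxC d j) * Y $$ (idxB d i, idxB d j))"

definition biseparable :: "nat \<Rightarrow> complex mat \<Rightarrow> bool" where
  "biseparable d \<rho> \<longleftrightarrow>
    (\<exists>(n::nat) (p::nat \<Rightarrow> real) (q::nat \<Rightarrow> real) (r::nat \<Rightarrow> real)
        \<rho>A \<rho>BC \<rho>AC \<rho>B \<rho>AB \<rho>C.
       (\<forall>l<n. p l \<ge> 0 \<and> q l \<ge> 0 \<and> r l \<ge> 0 \<and>
              density 2 (\<rho>A l) \<and> density (d * d) (\<rho>BC l) \<and>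
              density (2 * d) (\<rho>AC l) \<and> density d (\<rho>B l) \<and>
              density (2 * d) (\<rho>AB l) \<and> density d (\<rho>C l)) \<and>
       (\<Sum>l<n. p l + q l + r l) = 1 \<and>
       \<rho> = mat (2 * d * d) (2 * d * d) (\<lambda>ij.
              \<Sum>l<n. complex_of_real (p l) * kron (\<rho>A l) (\<rho>BC l) $$ ij
                    + complex_of_real (q l) * prod_AC_B d (\<rho>AC l) (\<rho>B l) $$ ij
                    + complex_of_real (r l) * kron (\<rho>AB l) (\<rho>C l) $$ ij))"

definition sigma_x :: "complex mat" where
  "sigma_x = mat_of_rows_list 2 [[0, 1], [1, 0]]"

definition sigma_y :: "complex mat" where
  "sigma_y = mat_of_rows_list 2 [[0, -\<i>], [\<i>, 0]]"

definition alice_obs :: "nat \<Rightarrow> complex mat" where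
  "alice_obs x = (if x = 0 then sigma_x else sigma_y)"

definition alice_proj :: "nat \<Rightarrow> nat \<Rightarrow> complex mat" where
  "alice_proj a x = (1 / 2 :: complex) \<cdot>\<^sub>m (1\<^sub>m 2 + ((-1) ^ a :: complex) \<cdot>\<^sub>m alice_obs x)"

type_synonym behaviour = "nat \<Rightarrow> nat \<Rightarrow> nat \<Rightarrow> nat \<Rightarrow> nat \<Rightarrow> nat \<Rightarrow> real"
  (* P a b c x y z, all arguments in {0,1} *)

text \<open>Svetlichny family; (-1)^(a xor b xor c xor xy xor yz xor xz) equals (-1)^(a+b+c+xy+yz+xz).\<close>
definition SvF :: "real \<Rightarrow> behaviour" where
  "SvF V a b c x y z = (2 + (-1) ^ (a + b + c + x * y + y * z + x * z) * sqrt 2 * V) / 16"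

definition biseparable_model :: "behaviour \<Rightarrow> bool" where
  "biseparable_model P \<longleftrightarrow>
    (\<exists>(d::nat) \<rho> (N :: nat \<Rightarrow> nat \<Rightarrow> complex mat) (N' :: nat \<Rightarrow> nat \<Rightarrow> complex mat).
       d \<ge> 1 \<and> biseparable d \<rho> \<and>
       (\<forall>y \<in> {0, 1}. povm2 d (N y)) \<and> (\<forall>z \<in> {0, 1}. povm2 d (N' z)) \<and>
       (\<forall>a \<in> {0, 1}. \<forall>b \<in> {0, 1}. \<forall>c \<in> {0, 1}. \<forall>x \<in> {0, 1}. \<forall>y \<in> {0, 1}. \<forall>z \<in> {0, 1}.
          complex_of_real (P a b c x y z) =
            mtrace (kron (kron (alice_proj a x) (N y b)) (N' z c) * \<rho>)))"

definition genuine_tripartite_steering_2SDI :: "behaviour \<Rightarrow> bool" where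
  "genuine_tripartite_steering_2SDI P \<longleftrightarrow> \<not> biseparable_model P"

end

theory Submission
  imports Defs
begin

definition qff :: "nat \<Rightarrow> (nat \<Rightarrow> nat \<Rightarrow> complex) \<Rightarrow> (nat \<Rightarrow> complex) \<Rightarrow> complex" where
  "qff n g v = (\<Sum>i<n. \<Sum>j<n. cnj (v i) * g i j * v j)"

definition nnc :: "complex \<Rightarrow> bool" where "nnc z \<longleftrightarrow> Im z = 0 \<and> 0 \<le> Re z"

definition psdf :: "nat \<Rightarrow> (nat \<Rightarrow> nat \<Rightarrow> complex) \<Rightarrow> bool" where
  "psdf n g \<longleftrightarrow> (\<forall>v. nnc (qff n g v))"

lemma qff_add:
  assumes "m < n"
  shows "qff n g (\<lambda>k. v k + (if k = m then t else 0)) = qff n g v + cnj t * (\<Sum>j<n. g m j * v j)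
     + t * (\<Sum>i<n. cnj (v i) * g i m) + cnj t * t * g m m"
proof -
  have e: "cnj (v i + (if i = m then t else 0)) * g i j * (v j + (if j = m then t else 0)) =
     cnj (v i) * g i j * v j + (if j = m then cnj (v i) * g i m * t else 0)
     + (if i = m then cnj t * g m j * v j else 0) + (if i = m then (if j = m then cnj t * g m m * t else 0) else 0)" for i j
    by (auto simp: algebra_simps)
  have ifs: "(\<Sum>j<n. if P then f j else 0) = (if P then (\<Sum>j<n. f j) else 0)" for P and f :: "nat \<Rightarrow> complex"
    by simp
  show ?thesis using assms
    unfolding qff_def e sum.distrib
    by (simp add: ifs sum.delta' sum_distrib_left sum_distrib_right algebra_simps)
qed

lemma nnc_add: "nnc a \<Longrightarrow> nnc b \<Longrightarrow> nnc (a + b)" by (simp add: nnc_def)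

lemma qff_zero: "qff n g (\<lambda>_. 0) = 0" by (simp add: qff_def)

lemma qff_delta:
  assumes "i < n" "m < n"
  shows "qff n g (\<lambda>k. (if k = i then 1 else 0) + (if k = m then t else 0)) =
     g i i + cnj t * g m i + t * g i m + cnj t * t * g m m"
proof -
  have "qff n g (\<lambda>k. (if k = i then 1 else 0) + (if k = m then t else 0)) =
     qff n g (\<lambda>k. (if k = i then 1 else 0)) + cnj t * (\<Sum>j<n. g m j * (if j = i then 1 else 0))
     + t * (\<Sum>ia<n. cnj (if ia = i then 1 else 0) * g ia m) + cnj t * t * g m m"
    by (rule qff_add[OF assms(2)])
  moreover have "qff n g (\<lambda>k. (if k = i then 1 else 0)) = g i i"
    using qff_add[OF assms(1), of g "\<lambda>_. 0" 1] by (simp add: qff_zero)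
  moreover have "(\<Sum>j<n. g m j * (if j = i then 1 else 0)) = g m i"
    using assms by (simp add: if_distrib[of "\<lambda>x. _ * x"] cong: if_cong)
  moreover have "(\<Sum>ia<n. cnj (if ia = i then 1 else 0) * g ia m) = g i m"
    using assms by (simp add: if_distrib[of cnj] if_distrib[of "\<lambda>x. x * _"] cong: if_cong)
  ultimately show ?thesis by simp
qed

lemma psdf_diag: "psdf n g \<Longrightarrow> i < n \<Longrightarrow> nnc (g i i)"
proof -
  assume p: "psdf n g" and i: "i < n"
  have "qff n g (\<lambda>k. (if k = i then 1 else 0) + (if k = i then 0 else 0)) = g i i"
    using qff_delta[OF i i, of g 0] by simp
  thus ?thesis using p unfolding psdf_def by metis
qed

lemma psdf_herm:
  assumes p: "psdf n g" and i: "i < n" and j: "j < n"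
  shows "g i j = cnj (g j i)"
proof -
  have d1: "nnc (g i i)" "nnc (g j j)" using psdf_diag[OF p] i j by auto
  have a: "nnc (g i i + cnj t * g j i + t * g i j + cnj t * t * g j j)" for t
    using p qff_delta[OF i j, of g t] unfolding psdf_def by metis
  from a[of 1] d1 have 1: "Im (g j i + g i j) = 0" by (simp add: nnc_def)
  from a[of \<i>] d1 have 2: "Re (g i j - g j i) = 0" by (simp add: nnc_def)
  have "Re (g i j) = Re (g j i)" "Im (g i j) = - Im (g j i)" using 1 2 by simp_all
  thus ?thesis by (simp add: complex_eq_iff)
qed

lemma psdf_zero_row:
  assumes p: "psdf n g" and m: "m < n" and j: "j < n" and z: "g m m = 0"
  shows "g m j = 0"
proof (rule ccontr)
  assume nz: "g m j \<noteq> 0"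
  define s where "s = g m j"
  define q where "q = (Re s)\<^sup>2 + (Im s)\<^sup>2"
  have h: "g j m = cnj s" using psdf_herm[OF p j m] s_def by simp
  have pos: "q > 0" using nz s_def q_def complex_neq_0 by metis
  have sc: "s * cnj s = complex_of_real q" unfolding q_def by (rule complex_mult_cnj)
  define R :: real where "R = (Re (g j j) + 1) / (2 * q)"
  define t where "t = - complex_of_real R * s"
  have "nnc (g j j + cnj t * g m j + t * g j m + cnj t * t * g m m)"
    using p qff_delta[OF j m, of g t] unfolding psdf_def by metis
  moreover have "g j j + cnj t * g m j + t * g j m + cnj t * t * g m m = g j j - complex_of_real (2 * R * q)"
  proof -
    have "cnj t * g m j = - complex_of_real R * (s * cnj s)" unfolding t_def s_def by simp
    moreover have "t * g j m = - complex_of_real R * (s * cnj s)" unfolding t_def h by simp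
    ultimately show ?thesis using z sc by simp
  qed
  ultimately have "0 \<le> Re (g j j) - 2 * R * q" by (simp add: nnc_def)
  moreover have "2 * R * q = Re (g j j) + 1" using pos unfolding R_def by simp
  ultimately show False by simp
qed


definition pf :: "nat \<Rightarrow> (nat \<Rightarrow> nat \<Rightarrow> complex) \<Rightarrow> (nat \<Rightarrow> nat \<Rightarrow> complex) \<Rightarrow> complex" where
  "pf n f g = (\<Sum>i<n. \<Sum>j<n. f i j * g j i)"

lemma psdf_restrict:
  assumes p: "psdf (Suc m) g" shows "psdf m g"
  unfolding psdf_def
proof
  fix v :: "nat \<Rightarrow> complex"
  define w where "w k = (if k < m then v k else 0)" for k
  have "qff (Suc m) g w = qff m g v"
    unfolding qff_def by (simp add: w_def)
  thus "nnc (qff m g v)" using p unfolding psdf_def by metis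
qed

lemma pf_reduce:
  assumes "\<And>j. j < Suc m \<Longrightarrow> g m j = 0" "\<And>j. j < Suc m \<Longrightarrow> g j m = 0"
  shows "pf (Suc m) f g = pf m f g"
  unfolding pf_def using assms by simp

lemma psdf_schur:
  assumes p: "psdf n g" and m: "m < n" and h0: "g m m \<noteq> 0"
  shows "psdf n (\<lambda>i j. g i j - g i m * g m j / g m m)"
  unfolding psdf_def
proof
  fix v :: "nat \<Rightarrow> complex"
  define h where "h = g m m"
  have hr: "cnj h = h" using psdf_diag[OF p m] unfolding h_def nnc_def by (simp add: complex_eq_iff)
  define S where "S = (\<Sum>j<n. g m j * v j)"
  have S2: "(\<Sum>i<n. cnj (v i) * g i m) = cnj S"
    unfolding S_def using psdf_herm[OF p _ m] by (auto intro!: sum.cong simp: mult.commute)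
  define c where "c = S / h"
  have "qff n (\<lambda>i j. g i j - g i m * g m j / g m m) v = qff n g v - (\<Sum>i<n. cnj (v i) * g i m) * (\<Sum>j<n. g m j * v j) / h"
  proof -
    have e: "(\<Sum>i<n. cnj (v i) * g i m) * (\<Sum>j<n. g m j * v j) / h = (\<Sum>i<n. \<Sum>j<n. cnj (v i) * (g i m * g m j / h) * v j)"
      unfolding sum_product sum_divide_distrib
      by (rule sum.cong[OF refl], rule sum.cong[OF refl]) (simp add: algebra_simps)
    show ?thesis unfolding e unfolding qff_def h_def
      by (simp add: algebra_simps sum_subtractf)
  qed
  also have "\<dots> = qff n g v - cnj S * S / h" using S2 S_def by simp
  also have "\<dots> = qff n g (\<lambda>k. v k + (if k = m then - c else 0))"
  proof -
    have hh: "h \<noteq> 0" using h0 h_def by simp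
    have cc: "cnj c = cnj S / h" using hr by (simp add: c_def)
    have "qff n g (\<lambda>k. v k + (if k = m then - c else 0)) = qff n g v + cnj (-c) * S + (-c) * cnj S + cnj (-c) * (-c) * h"
      using qff_add[OF m, of g v "- c"] S2 unfolding S_def[symmetric] h_def[symmetric] by simp
    also have "\<dots> = qff n g v - cnj S * S / h"
      unfolding complex_cnj_minus cc unfolding c_def using hh by (simp add: field_simps)
    finally show ?thesis by simp
  qed
  finally show "nnc (qff n (\<lambda>i j. g i j - g i m * g m j / g m m) v)"
    using p unfolding psdf_def by metis
qed

lemma pf_nonneg: "psdf n f \<Longrightarrow> psdf n g \<Longrightarrow> nnc (pf n f g)"
proof (induction n arbitrary: g)
  case 0
  then show ?case by (simp add: pf_def nnc_def)
next
  case (Suc m)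
  have fm: "psdf m f" using psdf_restrict Suc.prems(1) by blast
  show ?case
  proof (cases "g m m = 0")
    case True
    have r: "g m j = 0" if "j < Suc m" for j using psdf_zero_row[OF Suc.prems(2) _ that True] by simp
    have c: "g j m = 0" if "j < Suc m" for j using psdf_herm[OF Suc.prems(2) that, of m] r[OF that] by simp
    have "pf (Suc m) f g = pf m f g" by (rule pf_reduce) (use r c in auto)
    moreover have "nnc (pf m f g)" using Suc.IH[OF fm psdf_restrict[OF Suc.prems(2)]] .
    ultimately show ?thesis by simp
  next
    case False
    define h where "h = g m m"
    have hn: "nnc h" using psdf_diag[OF Suc.prems(2)] h_def by simp
    have hpos: "Re h > 0" using hn False h_def unfolding nnc_def by (simp add: complex_eq_iff less_eq_real_def)
    have hre: "h = complex_of_real (Re h)" using hn unfolding nnc_def by (simp add: complex_eq_iff)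
    define g' where "g' = (\<lambda>i j. g i j - g i m * g m j / g m m)"
    have pg': "psdf (Suc m) g'" unfolding g'_def by (rule psdf_schur[OF Suc.prems(2) _ False]) simp
    have r: "g' m j = 0" "g' j m = 0" for j unfolding g'_def using False by simp_all
    have "pf (Suc m) f g' = pf m f g'" by (rule pf_reduce) (simp_all add: r)
    hence n1: "nnc (pf (Suc m) f g')" using Suc.IH[OF fm psdf_restrict[OF pg']] by simp
    define sq where "sq = complex_of_real (sqrt (Re h))"
    have ss: "sqrt (Re h) * sqrt (Re h) = Re h" using hpos by simp
    have sq: "sq * sq = h" unfolding sq_def of_real_mult[symmetric] ss using hre by simp
    have sqn: "sq \<noteq> 0" using sq False h_def by auto
    define u where "u j = g j m / sq" for j
    have "pf (Suc m) f (\<lambda>i j. g i m * g m j / h) = qff (Suc m) f u"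
      unfolding pf_def qff_def
    proof (intro sum.cong refl)
      fix i j assume i: "i \<in> {..<Suc m}" and j: "j \<in> {..<Suc m}"
      have "cnj (g i m) = g m i" using psdf_herm[OF Suc.prems(2), of m i] i by simp
      moreover have "cnj sq = sq" unfolding sq_def by simp
      ultimately show "f i j * (g j m * g m i / h) = cnj (u i) * f i j * u j"
        unfolding u_def using sq sqn by (simp add: field_simps)
    qed
    hence n2: "nnc (pf (Suc m) f (\<lambda>i j. g i m * g m j / h))" using Suc.prems(1) unfolding psdf_def by metis
    have "pf (Suc m) f g = pf (Suc m) f g' + pf (Suc m) f (\<lambda>i j. g i m * g m j / h)"
      unfolding pf_def g'_def h_def by (simp add: algebra_simps sum.distrib[symmetric])
    thus ?thesis using nnc_add[OF n1 n2] by simp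
  qed
qed

abbreviation ent :: "complex mat \<Rightarrow> nat \<Rightarrow> nat \<Rightarrow> complex" where
  "ent M \<equiv> (\<lambda>i j. M $$ (i, j))"

lemma psd_iff: "psd n M \<longleftrightarrow> M \<in> carrier_mat n n \<and> psdf n (ent M)"
proof
  assume p: "psd n M"
  hence c: "M \<in> carrier_mat n n" unfolding psd_def by simp
  show "M \<in> carrier_mat n n \<and> psdf n (ent M)"
    unfolding psdf_def
  proof (intro conjI allI c)
    fix w :: "nat \<Rightarrow> complex"
    have "vec n w \<in> carrier_vec n" by simp
    hence l: "let q = (\<Sum>i<n. cnj (vec n w $ i) * (M *\<^sub>v vec n w) $ i) in Im q = 0 \<and> Re q \<ge> 0"
      using p unfolding psd_def by blast
    have e:  "(\<Sum>i<n. cnj (vec n w $ i) * (M *\<^sub>v vec n w) $ i) = qff n (ent M) w"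
      unfolding qff_def using c
      by (auto intro!: sum.cong simp: scalar_prod_def sum_distrib_left atLeast0LessThan algebra_simps)
    show "nnc (qff n (ent M) w)" using l unfolding Let_def e nnc_def .
  qed
next
  assume a: "M \<in> carrier_mat n n \<and> psdf n (ent M)"
  show "psd n M" unfolding psd_def
  proof (intro conjI ballI a[THEN conjunct1])
    fix v :: "complex vec" assume v: "v \<in> carrier_vec n"
    have "(\<Sum>i<n. cnj (v $ i) * (M *\<^sub>v v) $ i) = qff n (ent M) (\<lambda>i. v $ i)"
      unfolding qff_def using a v
      by (auto intro!: sum.cong simp: scalar_prod_def sum_distrib_left atLeast0LessThan algebra_simps)
    thus "let q = (\<Sum>i<n. cnj (v $ i) * (M *\<^sub>v v) $ i) in Im q = 0 \<and> Re q \<ge> 0"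
      using a unfolding psdf_def nnc_def Let_def by metis
  qed
qed

lemma mtrace_mult:
  assumes "A \<in> carrier_mat n n" "B \<in> carrier_mat n n"
  shows "mtrace (A * B) = pf n (ent A) (ent B)"
  unfolding mtrace_def pf_def using assms
  by (auto intro!: sum.cong simp: scalar_prod_def atLeast0LessThan)

lemma trace_nonneg:
  assumes "psd n A" "psd n B" shows "nnc (mtrace (A * B))"
  using assms pf_nonneg[of n "ent A" "ent B"] mtrace_mult[of A n B] unfolding psd_iff by simp

lemma sum_split: "(\<Sum>i<m*n. f i) = (\<Sum>a<m. \<Sum>b<n. f (a*n+b :: nat))"
proof (induction m)
  case 0 then show ?case by simp
next
  case (Suc m)
  have e: "{..<Suc m * n} = {..<m*n} \<union> {m*n..<m*n+n}" by auto
  have "(\<Sum>i\<in>{m*n..<m*n+n}. f i) = (\<Sum>b<n. f (m*n+b))"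
    using sum.shift_bounds_nat_ivl[of f 0 "m*n" n] by (simp add: atLeast0LessThan add.commute)
  thus ?case unfolding e using Suc by (simp add: sum.union_disjoint ivl_disj_int)
qed

lemma divmod_simps: "b < (n::nat) \<Longrightarrow> (a*n+b) div n = a" "b < (n::nat) \<Longrightarrow> (a*n+b) mod n = b"
  by auto

lemma sum_split2: "(\<Sum>i<m*n. g (i div n) (i mod n)) = (\<Sum>a<m. \<Sum>b<n. g a (b::nat))"
  unfolding sum_split by (rule sum.cong[OF refl], rule sum.cong[OF refl]) (simp add: divmod_simps)

lemma kron_dims[simp]: "dim_row (kron A B) = dim_row A * dim_row B" "dim_col (kron A B) = dim_col A * dim_col B"
  by (simp_all add: kron_def)

lemma kron_idx[simp]: "i < dim_row A * dim_row B \<Longrightarrow> j < dim_col A * dim_col B \<Longrightarrow>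
   kron A B $$ (i,j) = A $$ (i div dim_row B, j div dim_col B) * B $$ (i mod dim_row B, j mod dim_col B)"
  by (simp add: kron_def)

lemma kron_carrier: "A \<in> carrier_mat m m \<Longrightarrow> B \<in> carrier_mat n n \<Longrightarrow> kron A B \<in> carrier_mat (m*n) (m*n)"
proof -
  assume "A \<in> carrier_mat m m" "B \<in> carrier_mat n n"
  hence "dim_row A = m" "dim_col A = m" "dim_row B = n" "dim_col B = n" by auto
  thus ?thesis unfolding carrier_mat_def kron_dims by simp
qed


lemma sum_split4:
  "(\<Sum>i<m*n. \<Sum>j<m*n. F (i div n) (i mod n) (j div n) (j mod n)) = (\<Sum>a<m. \<Sum>b<n. \<Sum>a'<m. \<Sum>b'<n. F a b a' (b'::nat))"
proof -
  have "(\<Sum>j<m*n. F (i div n) (i mod n) (j div n) (j mod n)) = (\<Sum>a'<m. \<Sum>b'<n. F (i div n) (i mod n) a' b')" for i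
    using sum_split2[where m=m and n=n and g="\<lambda>a' b'. F (i div n) (i mod n) a' b'"] by simp
  hence "(\<Sum>i<m*n. \<Sum>j<m*n. F (i div n) (i mod n) (j div n) (j mod n)) = (\<Sum>i<m*n. \<Sum>a'<m. \<Sum>b'<n. F (i div n) (i mod n) a' b')"
    by simp
  also have "\<dots> = (\<Sum>a<m. \<Sum>b<n. \<Sum>a'<m. \<Sum>b'<n. F a b a' b')"
    using sum_split2[where m=m and n=n and g="\<lambda>a b. \<Sum>a'<m. \<Sum>b'<n. F a b a' b'"] by simp
  finally show ?thesis .
qed

lemma sum_split3:
  "(\<Sum>i<m*n*k. G (i div k div n) (i div k mod n) (i mod k)) = (\<Sum>a<m. \<Sum>b<n. \<Sum>c<k. G a b (c::nat))"
proof -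
  have "(\<Sum>i<m*n*k. G (i div k div n) (i div k mod n) (i mod k)) = (\<Sum>p<m*n. \<Sum>c<k. G (p div n) (p mod n) c)"
    using sum_split2[where m="m*n" and n=k and g="\<lambda>p c. G (p div n) (p mod n) c"] by simp
  also have "\<dots> = (\<Sum>a<m. \<Sum>b<n. \<Sum>c<k. G a b c)"
    using sum_split2[where m=m and n=n and g="\<lambda>a b. \<Sum>c<k. G a b c"] by simp
  finally show ?thesis .
qed

lemma sum_split6:
  "(\<Sum>i<m*n*k. \<Sum>j<m*n*k. F (i div k div n) (i div k mod n) (i mod k) (j div k div n) (j div k mod n) (j mod k)) =
   (\<Sum>a<m. \<Sum>b<n. \<Sum>c<k. \<Sum>a'<m. \<Sum>b'<n. \<Sum>c'<k. F a b c a' b' (c'::nat))"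
proof -
  have "(\<Sum>j<m*n*k. F (i div k div n) (i div k mod n) (i mod k) (j div k div n) (j div k mod n) (j mod k)) =
     (\<Sum>a'<m. \<Sum>b'<n. \<Sum>c'<k. F (i div k div n) (i div k mod n) (i mod k) a' b' c')" for i
    using sum_split3[where m=m and n=n and k=k and G="\<lambda>a' b' c'. F (i div k div n) (i div k mod n) (i mod k) a' b' c'"] by simp
  hence "(\<Sum>i<m*n*k. \<Sum>j<m*n*k. F (i div k div n) (i div k mod n) (i mod k) (j div k div n) (j div k mod n) (j mod k)) =
     (\<Sum>i<m*n*k. \<Sum>a'<m. \<Sum>b'<n. \<Sum>c'<k. F (i div k div n) (i div k mod n) (i mod k) a' b' c')" by simp
  also have "\<dots> = (\<Sum>a<m. \<Sum>b<n. \<Sum>c<k. \<Sum>a'<m. \<Sum>b'<n. \<Sum>c'<k. F a b c a' b' c')"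
    using sum_split3[where m=m and n=n and k=k and G="\<lambda>a b c. \<Sum>a'<m. \<Sum>b'<n. \<Sum>c'<k. F a b c a' b' c'"] by simp
  finally show ?thesis .
qed

lemma kron_trace:
  assumes P: "P \<in> carrier_mat m m" and X: "X \<in> carrier_mat m m"
    and Q: "Q \<in> carrier_mat n n" and Y: "Y \<in> carrier_mat n n"
  shows "mtrace (kron P Q * kron X Y) = mtrace (P * X) * mtrace (Q * Y)"
proof -
  have dims: "dim_row P = m" "dim_col P = m" "dim_row X = m" "dim_col X = m"
    "dim_row Q = n" "dim_col Q = n" "dim_row Y = n" "dim_col Y = n" using assms by auto
  have "mtrace (kron P Q * kron X Y) = pf (m*n) (ent (kron P Q)) (ent (kron X Y))"
    by (rule mtrace_mult) (use assms kron_carrier in auto)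
  also have "\<dots> = (\<Sum>i<m*n. \<Sum>j<m*n. (\<lambda>a b a' b'. P $$ (a, a') * Q $$ (b, b') * (X $$ (a', a) * Y $$ (b', b)))
          (i div n) (i mod n) (j div n) (j mod n))"
    unfolding pf_def by (intro sum.cong refl) (simp add: dims)
  also have "\<dots> = (\<Sum>a<m. \<Sum>b<n. \<Sum>a'<m. \<Sum>b'<n. P $$ (a, a') * Q $$ (b, b') * (X $$ (a', a) * Y $$ (b', b)))"
    by (rule sum_split4)
  also have "\<dots> = (\<Sum>a<m. \<Sum>a'<m. \<Sum>b<n. \<Sum>b'<n. P $$ (a, a') * Q $$ (b, b') * (X $$ (a', a) * Y $$ (b', b)))"
    by (rule sum.cong[OF refl], rule sum.swap)
  also have "\<dots> = (\<Sum>a<m. \<Sum>a'<m. P $$ (a, a') * X $$ (a', a) * pf n (ent Q) (ent Y))"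
    unfolding pf_def by (simp add: sum_distrib_left algebra_simps)
  also have "\<dots> = pf m (ent P) (ent X) * pf n (ent Q) (ent Y)"
    unfolding pf_def[of m] by (simp add: sum_distrib_right)
  also have "\<dots> = mtrace (P * X) * mtrace (Q * Y)"
    using mtrace_mult[OF P X] mtrace_mult[OF Q Y] by simp
  finally show ?thesis .
qed

lemma divmod_assoc:
  assumes "i < a * (b * (c::nat))"
  shows "i div c div b = i div (b*c)" "i div c mod b = i mod (b*c) div c" "i mod (b*c) mod c = i mod c"
    "i mod (b*c) < b * c" "i div c < a * b"
proof -
  have c0: "c > 0" using assms by (metis mult_0_right not_gr0 not_less_zero)
  have b0: "b > 0" using assms by (metis mult_0_right mult_0 not_gr0 not_less_zero)
  show "i div c div b = i div (b*c)" by (metis div_mult2_eq mult.commute)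
  have m: "i mod (c*b) = c*(i div c mod b) + i mod c" by (rule mod_mult2_eq)
  have r: "i mod c < c" using c0 by simp
  show "i div c mod b = i mod (b*c) div c" using m r c0 by (simp add: mult.commute)
  show "i mod (b*c) mod c = i mod c" using m r c0 by (simp add: mult.commute)
  show "i mod (b*c) < b * c" using b0 c0 by simp
  show "i div c < a * b" using assms c0 by (simp add: div_less_iff_less_mult mult.assoc)
qed

lemma kron_assoc:
  "kron (kron A B) C = kron A (kron B C)"
proof (rule eq_matI)
  show "dim_row (kron (kron A B) C) = dim_row (kron A (kron B C))" by simp
  show "dim_col (kron (kron A B) C) = dim_col (kron A (kron B C))" by simp
  fix i j assume i: "i < dim_row (kron A (kron B C))" and j: "j < dim_col (kron A (kron B C))"
  have i': "i < dim_row A * (dim_row B * dim_row C)" and j': "j < dim_col A * (dim_col B * dim_col C)" using i j by simp_all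
  note I = divmod_assoc[OF i'] and J = divmod_assoc[OF j']
  have "kron (kron A B) C $$ (i, j) = kron A B $$ (i div dim_row C, j div dim_col C) * C $$ (i mod dim_row C, j mod dim_col C)"
    using i' j' by (simp add: mult.assoc)
  also have "\<dots> = A $$ (i div dim_row C div dim_row B, j div dim_col C div dim_col B) *
      B $$ (i div dim_row C mod dim_row B, j div dim_col C mod dim_col B) * C $$ (i mod dim_row C, j mod dim_col C)"
    using I(5) J(5) by simp
  also have "\<dots> = kron A (kron B C) $$ (i, j)"
    using i' j' I J by simp
  finally show "kron (kron A B) C $$ (i, j) = kron A (kron B C) $$ (i, j)" .
qed

lemma perm6:
  "(\<Sum>a\<in>A1. \<Sum>b\<in>B1. \<Sum>c\<in>C1. \<Sum>a'\<in>A2. \<Sum>b'\<in>B2. \<Sum>c'\<in>C2. f a b c a' b' c') =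
   (\<Sum>a\<in>A1. \<Sum>c\<in>C1. \<Sum>a'\<in>A2. \<Sum>c'\<in>C2. \<Sum>b\<in>B1. \<Sum>b'\<in>B2. f a b c a' b' c')"
proof (rule sum.cong[OF refl])
  fix a
  have s1: "(\<Sum>b\<in>B1. \<Sum>c\<in>C1. \<Sum>a'\<in>A2. \<Sum>b'\<in>B2. \<Sum>c'\<in>C2. f a b c a' b' c') =
     (\<Sum>c\<in>C1. \<Sum>b\<in>B1. \<Sum>a'\<in>A2. \<Sum>b'\<in>B2. \<Sum>c'\<in>C2. f a b c a' b' c')" by (rule sum.swap)
  have s2: "(\<Sum>b\<in>B1. \<Sum>a'\<in>A2. \<Sum>b'\<in>B2. \<Sum>c'\<in>C2. f a b c a' b' c') =
     (\<Sum>a'\<in>A2. \<Sum>b\<in>B1. \<Sum>b'\<in>B2. \<Sum>c'\<in>C2. f a b c a' b' c')" for c by (rule sum.swap)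
  have s3: "(\<Sum>b\<in>B1. \<Sum>b'\<in>B2. \<Sum>c'\<in>C2. f a b c a' b' c') =
     (\<Sum>c'\<in>C2. \<Sum>b\<in>B1. \<Sum>b'\<in>B2. f a b c a' b' c')" for c a'
  proof -
    have "(\<Sum>b\<in>B1. \<Sum>b'\<in>B2. \<Sum>c'\<in>C2. f a b c a' b' c') = (\<Sum>b\<in>B1. \<Sum>c'\<in>C2. \<Sum>b'\<in>B2. f a b c a' b' c')"
      by (rule sum.cong[OF refl], rule sum.swap)
    also have "\<dots> = (\<Sum>c'\<in>C2. \<Sum>b\<in>B1. \<Sum>b'\<in>B2. f a b c a' b' c')" by (rule sum.swap)
    finally show ?thesis .
  qed
  show "(\<Sum>b\<in>B1. \<Sum>c\<in>C1. \<Sum>a'\<in>A2. \<Sum>b'\<in>B2. \<Sum>c'\<in>C2. f a b c a' b' c') =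
     (\<Sum>c\<in>C1. \<Sum>a'\<in>A2. \<Sum>c'\<in>C2. \<Sum>b\<in>B1. \<Sum>b'\<in>B2. f a b c a' b' c')"
    unfolding s1 s2 s3 ..
qed

lemma prod_trace:
  assumes A: "A \<in> carrier_mat 2 2" and B: "B \<in> carrier_mat d d" and C: "C \<in> carrier_mat d d"
    and X: "X \<in> carrier_mat (2*d) (2*d)" and Y: "Y \<in> carrier_mat d d"
  shows "mtrace (kron (kron A B) C * prod_AC_B d X Y) = mtrace (kron A C * X) * mtrace (B * Y)"
proof -
  have dims: "dim_row A = 2" "dim_col A = 2" "dim_row B = d" "dim_col B = d" "dim_row C = d" "dim_col C = d"
    using assms by auto
  define F where "F a b c a' b' c' = A $$ (a, a') * B $$ (b, b') * C $$ (c, c') * (X $$ (a' * d + c', a * d + c) * Y $$ (b', b))" for a b c a' b' c'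
  have K: "kron (kron A B) C \<in> carrier_mat (2*d*d) (2*d*d)" using kron_carrier[OF kron_carrier[OF A B] C] .
  have R: "prod_AC_B d X Y \<in> carrier_mat (2*d*d) (2*d*d)" by (simp add: prod_AC_B_def)
  have "mtrace (kron (kron A B) C * prod_AC_B d X Y) = pf (2*d*d) (ent (kron (kron A B) C)) (ent (prod_AC_B d X Y))"
    by (rule mtrace_mult[OF K R])
  also have "\<dots> = (\<Sum>i<2*d*d. \<Sum>j<2*d*d. F (i div d div d) (i div d mod d) (i mod d) (j div d div d) (j div d mod d) (j mod d))"
    unfolding pf_def
  proof (intro sum.cong refl)
    fix i j assume i: "i \<in> {..<2*d*d}" and j: "j \<in> {..<2*d*d}"
    have i': "i < 2 * (d * d)" and j': "j < 2 * (d*d)" using i j by (simp_all add: mult.assoc)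
    note I = divmod_assoc[OF i'] and J = divmod_assoc[OF j']
    show "kron (kron A B) C $$ (i, j) * prod_AC_B d X Y $$ (j, i) =
      F (i div d div d) (i div d mod d) (i mod d) (j div d div d) (j div d mod d) (j mod d)"
      using i' j' I(5) J(5) unfolding F_def prod_AC_B_def idxA_def idxB_def idxC_def
      by (simp add: dims mult.assoc I(1) J(1))
  qed
  also have "\<dots> = (\<Sum>a<2. \<Sum>b<d. \<Sum>c<d. \<Sum>a'<2. \<Sum>b'<d. \<Sum>c'<d. F a b c a' b' c')"
    by (rule sum_split6)
  also have "\<dots> = (\<Sum>a<2. \<Sum>c<d. \<Sum>a'<2. \<Sum>c'<d. \<Sum>b<d. \<Sum>b'<d. F a b c a' b' c')"
    by (rule perm6)
  also have "\<dots> = (\<Sum>a<2. \<Sum>c<d. \<Sum>a'<2. \<Sum>c'<d. A $$ (a, a') * C $$ (c, c') * X $$ (a' * d + c', a * d + c) * pf d (ent B) (ent Y))"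
    unfolding F_def pf_def by (simp add: sum_distrib_left algebra_simps)
  also have "\<dots> = (\<Sum>a<2. \<Sum>c<d. \<Sum>a'<2. \<Sum>c'<d. A $$ (a, a') * C $$ (c, c') * X $$ (a' * d + c', a * d + c)) * pf d (ent B) (ent Y)"
    by (simp add: sum_distrib_right)
  also have "(\<Sum>a<2. \<Sum>c<d. \<Sum>a'<2. \<Sum>c'<d. A $$ (a, a') * C $$ (c, c') * X $$ (a' * d + c', a * d + c)) = pf (2*d) (ent (kron A C)) (ent X)"
  proof -
    have "pf (2*d) (ent (kron A C)) (ent X) = (\<Sum>i<2*d. \<Sum>j<2*d. (\<lambda>a c a' c'. A $$ (a, a') * C $$ (c, c') * X $$ (a' * d + c', a * d + c)) (i div d) (i mod d) (j div d) (j mod d))"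
      unfolding pf_def
    proof (intro sum.cong refl)
      fix i j assume "i \<in> {..<2*d}" "j \<in> {..<2*d}"
      thus "kron A C $$ (i, j) * X $$ (j, i) = (\<lambda>a c a' c'. A $$ (a, a') * C $$ (c, c') * X $$ (a' * d + c', a * d + c)) (i div d) (i mod d) (j div d) (j mod d)"
        by (simp add: dims mult.commute[of _ d])
    qed
    also have "\<dots> = (\<Sum>a<2. \<Sum>c<d. \<Sum>a'<2. \<Sum>c'<d. A $$ (a, a') * C $$ (c, c') * X $$ (a' * d + c', a * d + c))"
      by (rule sum_split4)
    finally show ?thesis by simp
  qed
  also have "pf (2*d) (ent (kron A C)) (ent X) = mtrace (kron A C * X)"
    using mtrace_mult[OF kron_carrier[OF A C] X] by simp
  also have "pf d (ent B) (ent Y) = mtrace (B * Y)" using mtrace_mult[OF B Y] by simp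
  finally show ?thesis .
qed


lemma perm4a: "(\<Sum>a\<in>A. \<Sum>b\<in>B. \<Sum>c\<in>C. \<Sum>d\<in>D. f a b c d) = (\<Sum>b\<in>B. \<Sum>d\<in>D. \<Sum>a\<in>A. \<Sum>c\<in>C. f a b c d)"
proof -
  have "(\<Sum>a\<in>A. \<Sum>b\<in>B. \<Sum>c\<in>C. \<Sum>d\<in>D. f a b c d) = (\<Sum>b\<in>B. \<Sum>a\<in>A. \<Sum>c\<in>C. \<Sum>d\<in>D. f a b c d)" by (rule sum.swap)
  also have "\<dots> = (\<Sum>b\<in>B. \<Sum>a\<in>A. \<Sum>d\<in>D. \<Sum>c\<in>C. f a b c d)"
    by (rule sum.cong[OF refl], rule sum.cong[OF refl], rule sum.swap)
  also have "\<dots> = (\<Sum>b\<in>B. \<Sum>d\<in>D. \<Sum>a\<in>A. \<Sum>c\<in>C. f a b c d)"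
    by (rule sum.cong[OF refl], rule sum.swap)
  finally show ?thesis .
qed

lemma perm4b: "(\<Sum>a\<in>A. \<Sum>b\<in>B. \<Sum>c\<in>C. \<Sum>d\<in>D. f a b c d) = (\<Sum>d\<in>D. \<Sum>c\<in>C. \<Sum>a\<in>A. \<Sum>b\<in>B. f a b c d)"
proof -
  have "(\<Sum>a\<in>A. \<Sum>b\<in>B. \<Sum>c\<in>C. \<Sum>d\<in>D. f a b c d) = (\<Sum>a\<in>A. \<Sum>b\<in>B. \<Sum>d\<in>D. \<Sum>c\<in>C. f a b c d)"
    by (rule sum.cong[OF refl], rule sum.cong[OF refl], rule sum.swap)
  also have "\<dots> = (\<Sum>a\<in>A. \<Sum>d\<in>D. \<Sum>b\<in>B. \<Sum>c\<in>C. f a b c d)"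
    by (rule sum.cong[OF refl], rule sum.swap)
  also have "\<dots> = (\<Sum>d\<in>D. \<Sum>a\<in>A. \<Sum>b\<in>B. \<Sum>c\<in>C. f a b c d)" by (rule sum.swap)
  also have "\<dots> = (\<Sum>d\<in>D. \<Sum>a\<in>A. \<Sum>c\<in>C. \<Sum>b\<in>B. f a b c d)"
    by (rule sum.cong[OF refl], rule sum.cong[OF refl], rule sum.swap)
  also have "\<dots> = (\<Sum>d\<in>D. \<Sum>c\<in>C. \<Sum>a\<in>A. \<Sum>b\<in>B. f a b c d)"
    by (rule sum.cong[OF refl], rule sum.swap)
  finally show ?thesis .
qed

lemma kron_psd:
  assumes P: "psd m P" and Q: "psd n Q"
  shows "psd (m*n) (kron P Q)"
proof -
  have Pc: "P \<in> carrier_mat m m" and Pf: "psdf m (ent P)" using P unfolding psd_iff by auto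
  have Qc: "Q \<in> carrier_mat n n" and Qf: "psdf n (ent Q)" using Q unfolding psd_iff by auto
  have dims: "dim_row P = m" "dim_col P = m" "dim_row Q = n" "dim_col Q = n" using Pc Qc by auto
  have "psdf (m*n) (ent (kron P Q))"
    unfolding psdf_def
  proof
    fix v :: "nat \<Rightarrow> complex"
    define W where "W b' b = (\<Sum>a<m. \<Sum>a'<m. cnj (v (a*n+b)) * P $$ (a, a') * v (a'*n+b'))" for b' b
    have "qff (m*n) (ent (kron P Q)) v = (\<Sum>i<m*n. \<Sum>j<m*n.
        (\<lambda>a b a' b'. cnj (v (a*n+b)) * P $$ (a, a') * Q $$ (b, b') * v (a'*n+b')) (i div n) (i mod n) (j div n) (j mod n))"
      unfolding qff_def
    proof (intro sum.cong refl)
      fix i j assume "i \<in> {..<m*n}" "j \<in> {..<m*n}"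
      thus "cnj (v i) * kron P Q $$ (i, j) * v j = (\<lambda>a b a' b'. cnj (v (a*n+b)) * P $$ (a, a') * Q $$ (b, b') * v (a'*n+b')) (i div n) (i mod n) (j div n) (j mod n)"
        by (simp add: dims)
    qed
    also have "\<dots> = (\<Sum>a<m. \<Sum>b<n. \<Sum>a'<m. \<Sum>b'<n. cnj (v (a*n+b)) * P $$ (a, a') * Q $$ (b, b') * v (a'*n+b'))"
      by (rule sum_split4)
    also have "\<dots> = (\<Sum>b<n. \<Sum>b'<n. \<Sum>a<m. \<Sum>a'<m. cnj (v (a*n+b)) * P $$ (a, a') * Q $$ (b, b') * v (a'*n+b'))"
      by (rule perm4a)
    also have "\<dots> = pf n (ent Q) W"
      unfolding pf_def W_def by (simp add: sum_distrib_left algebra_simps)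
    finally have e: "qff (m*n) (ent (kron P Q)) v = pf n (ent Q) W" .
    have "psdf n W" unfolding psdf_def
    proof
      fix w :: "nat \<Rightarrow> complex"
      define u where "u a = (\<Sum>j<n. v (a*n+j) * cnj (w j))" for a
      have "qff m (ent P) u = (\<Sum>a<m. \<Sum>a'<m. \<Sum>j<n. \<Sum>i<n. cnj (w i) * (cnj (v (a*n+j)) * P $$ (a, a') * v (a'*n+i)) * w j)"
        unfolding qff_def u_def by (simp add: sum_distrib_left sum_distrib_right algebra_simps)
      also have "\<dots> = (\<Sum>i<n. \<Sum>j<n. \<Sum>a<m. \<Sum>a'<m. cnj (w i) * (cnj (v (a*n+j)) * P $$ (a, a') * v (a'*n+i)) * w j)"
        by (rule perm4b)
      also have "\<dots> = qff n W w"
        unfolding qff_def W_def by (simp add: sum_distrib_left sum_distrib_right)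
      finally show "nnc (qff n W w)" using Pf unfolding psdf_def by metis
    qed
    thus "nnc (qff (m*n) (ent (kron P Q)) v)" unfolding e using pf_nonneg[OF Qf] by simp
  qed
  thus ?thesis unfolding psd_iff using kron_carrier[OF Pc Qc] by simp
qed

definition svs :: "(nat \<Rightarrow> nat \<Rightarrow> nat \<Rightarrow> nat \<Rightarrow> nat \<Rightarrow> nat \<Rightarrow> real) \<Rightarrow> real" where
  "svs F = (\<Sum>a\<in>{0,1}. \<Sum>b\<in>{0,1}. \<Sum>c\<in>{0,1}. \<Sum>x\<in>{0,1}. \<Sum>y\<in>{0,1}. \<Sum>z\<in>{0,1}.
      (-1) ^ (a+b+c+x*y+y*z+x*z) * F a b c x y z)"

lemma core_ineq:
  fixes e0 e1 g00 g01 g10 g11 :: real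
  assumes "\<bar>e0\<bar> \<le> 1" "\<bar>e1\<bar> \<le> 1" "\<bar>g00\<bar> \<le> 1" "\<bar>g01\<bar> \<le> 1" "\<bar>g10\<bar> \<le> 1" "\<bar>g11\<bar> \<le> 1"
  shows "e0*(g00+g01+g10-g11) + e1*(g00-g01-g10-g11) \<le> 4"
proof -
  have bnd: "g * u \<le> \<bar>u\<bar>" if "\<bar>g\<bar> \<le> 1" for g u :: real
  proof -
    have "g * u \<le> \<bar>g * u\<bar>" by simp
    also have "\<dots> = \<bar>g\<bar> * \<bar>u\<bar>" by (simp add: abs_mult)
    also have "\<dots> \<le> 1 * \<bar>u\<bar>" by (rule mult_right_mono) (use that in auto)
    finally show ?thesis by simp
  qed
  have "e0*(g00+g01+g10-g11) + e1*(g00-g01-g10-g11) = g00*(e0+e1) + g01*(e0-e1) + g10*(e0-e1) + g11*(-e0-e1)"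
    by (simp add: algebra_simps)
  also have "\<dots> \<le> \<bar>e0+e1\<bar> + \<bar>e0-e1\<bar> + \<bar>e0-e1\<bar> + \<bar>-e0-e1\<bar>"
    using bnd[OF assms(3)] bnd[OF assms(4)] bnd[OF assms(5)] bnd[OF assms(6)] by (intro add_mono) auto
  also have "\<dots> \<le> 4" using assms(1,2) by (auto simp: abs_if)
  finally show ?thesis .
qed

lemma abs_diff_prob: "(p::real) \<ge> 0 \<Longrightarrow> q \<ge> 0 \<Longrightarrow> p + q = 1 \<Longrightarrow> \<bar>p - q\<bar> \<le> 1" by auto

lemma abs_corr4: "(p00::real) \<ge> 0 \<Longrightarrow> p01 \<ge> 0 \<Longrightarrow> p10 \<ge> 0 \<Longrightarrow> p11 \<ge> 0 \<Longrightarrow> p00 + p01 + p10 + p11 = 1 \<Longrightarrow>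
   \<bar>p00 - p01 - p10 + p11\<bar> \<le> 1" by auto

lemma svs_A:
  fixes \<alpha> :: "nat \<Rightarrow> nat \<Rightarrow> real" and \<beta> :: "nat \<Rightarrow> nat \<Rightarrow> nat \<Rightarrow> nat \<Rightarrow> real"
  assumes a0: "\<And>a x. a \<in> {0,1} \<Longrightarrow> x \<in> {0,1} \<Longrightarrow> \<alpha> a x \<ge> 0" and a1: "\<And>x. x \<in> {0,1} \<Longrightarrow> \<alpha> 0 x + \<alpha> 1 x = 1"
    and b0: "\<And>b c y z. b \<in> {0,1} \<Longrightarrow> c \<in> {0,1} \<Longrightarrow> y \<in> {0,1} \<Longrightarrow> z \<in> {0,1} \<Longrightarrow> \<beta> b c y z \<ge> 0"
    and b1: "\<And>y z. y \<in> {0,1} \<Longrightarrow> z \<in> {0,1} \<Longrightarrow> \<beta> 0 0 y z + \<beta> 0 1 y z + \<beta> 1 0 y z + \<beta> 1 1 y z = 1"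
  shows "svs (\<lambda>a b c x y z. \<alpha> a x * \<beta> b c y z) \<le> 4"
proof -
  define e where "e x = \<alpha> 0 x - \<alpha> 1 x" for x
  define g where "g y z = \<beta> 0 0 y z - \<beta> 0 1 y z - \<beta> 1 0 y z + \<beta> 1 1 y z" for y z
  have "svs (\<lambda>a b c x y z. \<alpha> a x * \<beta> b c y z) = e 0*(g 0 0+g 0 1+g 1 0-g 1 1) + e 1*(g 0 0-g 0 1-g 1 0-g 1 1)"
    unfolding svs_def e_def g_def by (simp add: algebra_simps)
  also have "\<dots> \<le> 4"
    by (rule core_ineq) (unfold e_def g_def, (rule abs_diff_prob abs_corr4; (rule a0 a1 b0 b1; simp)?)+)
  finally show ?thesis .
qed


lemma svs_B:
  fixes \<alpha> :: "nat \<Rightarrow> nat \<Rightarrow> real" and \<beta> :: "nat \<Rightarrow> nat \<Rightarrow> nat \<Rightarrow> nat \<Rightarrow> real"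
  assumes a0: "\<And>a x. a \<in> {0,1} \<Longrightarrow> x \<in> {0,1} \<Longrightarrow> \<alpha> a x \<ge> 0" and a1: "\<And>x. x \<in> {0,1} \<Longrightarrow> \<alpha> 0 x + \<alpha> 1 x = 1"
    and b0: "\<And>b c y z. b \<in> {0,1} \<Longrightarrow> c \<in> {0,1} \<Longrightarrow> y \<in> {0,1} \<Longrightarrow> z \<in> {0,1} \<Longrightarrow> \<beta> b c y z \<ge> 0"
    and b1: "\<And>y z. y \<in> {0,1} \<Longrightarrow> z \<in> {0,1} \<Longrightarrow> \<beta> 0 0 y z + \<beta> 0 1 y z + \<beta> 1 0 y z + \<beta> 1 1 y z = 1"
  shows "svs (\<lambda>a b c x y z. \<alpha> b y * \<beta> a c x z) \<le> 4"
proof -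
  define e where "e x = \<alpha> 0 x - \<alpha> 1 x" for x
  define g where "g y z = \<beta> 0 0 y z - \<beta> 0 1 y z - \<beta> 1 0 y z + \<beta> 1 1 y z" for y z
  have "svs (\<lambda>a b c x y z. \<alpha> b y * \<beta> a c x z) = e 0*(g 0 0+g 0 1+g 1 0-g 1 1) + e 1*(g 0 0-g 0 1-g 1 0-g 1 1)"
    unfolding svs_def e_def g_def by (simp add: algebra_simps)
  also have "\<dots> \<le> 4"
    by (rule core_ineq) (unfold e_def g_def, (rule abs_diff_prob abs_corr4; (rule a0 a1 b0 b1; simp)?)+)
  finally show ?thesis .
qed

lemma svs_C:
  fixes \<alpha> :: "nat \<Rightarrow> nat \<Rightarrow> real" and \<beta> :: "nat \<Rightarrow> nat \<Rightarrow> nat \<Rightarrow> nat \<Rightarrow> real"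
  assumes a0: "\<And>a x. a \<in> {0,1} \<Longrightarrow> x \<in> {0,1} \<Longrightarrow> \<alpha> a x \<ge> 0" and a1: "\<And>x. x \<in> {0,1} \<Longrightarrow> \<alpha> 0 x + \<alpha> 1 x = 1"
    and b0: "\<And>b c y z. b \<in> {0,1} \<Longrightarrow> c \<in> {0,1} \<Longrightarrow> y \<in> {0,1} \<Longrightarrow> z \<in> {0,1} \<Longrightarrow> \<beta> b c y z \<ge> 0"
    and b1: "\<And>y z. y \<in> {0,1} \<Longrightarrow> z \<in> {0,1} \<Longrightarrow> \<beta> 0 0 y z + \<beta> 0 1 y z + \<beta> 1 0 y z + \<beta> 1 1 y z = 1"
  shows "svs (\<lambda>a b c x y z. \<alpha> c z * \<beta> a b x y) \<le> 4"
proof -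
  define e where "e x = \<alpha> 0 x - \<alpha> 1 x" for x
  define g where "g y z = \<beta> 0 0 y z - \<beta> 0 1 y z - \<beta> 1 0 y z + \<beta> 1 1 y z" for y z
  have "svs (\<lambda>a b c x y z. \<alpha> c z * \<beta> a b x y) = e 0*(g 0 0+g 0 1+g 1 0-g 1 1) + e 1*(g 0 0-g 0 1-g 1 0-g 1 1)"
    unfolding svs_def e_def g_def by (simp add: algebra_simps)
  also have "\<dots> \<le> 4"
    by (rule core_ineq) (unfold e_def g_def, (rule abs_diff_prob abs_corr4; (rule a0 a1 b0 b1; simp)?)+)
  finally show ?thesis .
qed

lemma svs_cong:
  assumes "\<And>a b c x y z. a \<in> {0,1} \<Longrightarrow> b \<in> {0,1} \<Longrightarrow> c \<in> {0,1} \<Longrightarrow> x \<in> {0,1} \<Longrightarrow> y \<in> {0,1} \<Longrightarrow> z \<in> {0,1} \<Longrightarrow>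
     F a b c x y z = G a b c x y z"
  shows "svs F = svs G"
  unfolding svs_def using assms by simp

lemma svs_add: "svs (\<lambda>a b c x y z. F a b c x y z + G a b c x y z) = svs F + svs G"
  unfolding svs_def by (simp add: algebra_simps)

lemma svs_sum: "svs (\<lambda>a b c x y z. \<Sum>l<(n::nat). F l a b c x y z) = (\<Sum>l<n. svs (F l))"
proof (induction n)
  case 0 then show ?case by (simp add: svs_def)
next
  case (Suc n)
  have "svs (\<lambda>a b c x y z. \<Sum>l<Suc n. F l a b c x y z) = svs (\<lambda>a b c x y z. (\<Sum>l<n. F l a b c x y z) + F n a b c x y z)"
    by simp
  also have "\<dots> = svs (\<lambda>a b c x y z. \<Sum>l<n. F l a b c x y z) + svs (F n)"
    by (rule svs_add)
  finally show ?case using Suc by simp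
qed

lemma svs_lin3: "svs (\<lambda>a b c x y z. p * F a b c x y z + q * G a b c x y z + r * H a b c x y z) = p * svs F + q * svs G + r * svs H"
  unfolding svs_def by (simp add: algebra_simps)

definition rk1 :: "nat \<Rightarrow> real \<Rightarrow> (nat \<Rightarrow> complex) \<Rightarrow> complex mat" where
  "rk1 n c u = mat n n (\<lambda>(i,j). complex_of_real c * u i * cnj (u j))"

lemma rk1_carrier[simp]: "rk1 n c u \<in> carrier_mat n n" by (simp add: rk1_def)
lemma rk1_idx[simp]: "i < n \<Longrightarrow> j < n \<Longrightarrow> rk1 n c u $$ (i,j) = complex_of_real c * u i * cnj (u j)"
  by (simp add: rk1_def)

lemma psd_rk1: "c \<ge> 0 \<Longrightarrow> psd n (rk1 n c u)"
  unfolding psd_iff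
proof (intro conjI rk1_carrier)
  assume c: "c \<ge> 0"
  show "psdf n (ent (rk1 n c u))" unfolding psdf_def
  proof
    fix v :: "nat \<Rightarrow> complex"
    define S where "S = (\<Sum>i<n. cnj (v i) * u i)"
    have sc: "S * cnj S = (\<Sum>i<n. \<Sum>j<n. (cnj (v i) * u i) * (v j * cnj (u j)))"
      unfolding S_def cnj_sum by (simp add: sum_product)
    have "qff n (ent (rk1 n c u)) v = complex_of_real c * (S * cnj S)"
      unfolding sc qff_def sum_distrib_left by (intro sum.cong refl) (simp add: algebra_simps)
    also have "\<dots> = complex_of_real (c * ((Re S)\<^sup>2 + (Im S)\<^sup>2))" by (simp add: complex_mult_cnj)
    finally show "nnc (qff n (ent (rk1 n c u)) v)" using c unfolding nnc_def by simp
  qed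
qed

lemma psd_add: "psd n A \<Longrightarrow> psd n B \<Longrightarrow> psd n (A + B)"
  unfolding psd_iff psdf_def
proof (intro conjI allI)
  assume a: "A \<in> carrier_mat n n \<and> (\<forall>v. nnc (qff n (ent A) v))" and b: "B \<in> carrier_mat n n \<and> (\<forall>v. nnc (qff n (ent B) v))"
  show "A + B \<in> carrier_mat n n" using a b by simp
  fix v
  have "qff n (ent (A + B)) v = (\<Sum>i<n. \<Sum>j<n. cnj (v i) * A $$ (i, j) * v j + cnj (v i) * B $$ (i, j) * v j)"
  proof -
    have Bc: "dim_row B = n" "dim_col B = n" using b by auto
    show ?thesis unfolding qff_def using Bc by (intro sum.cong refl) (simp add: algebra_simps)
  qed
  also have "\<dots> = qff n (ent A) v + qff n (ent B) v" unfolding qff_def by (simp add: sum.distrib)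
  finally have "qff n (ent (A + B)) v = qff n (ent A) v + qff n (ent B) v" .
  thus "nnc (qff n (ent (A + B)) v)" using a b nnc_add by simp
qed

lemma psd_zero: "psd n (0\<^sub>m n n)"
  unfolding psd_iff psdf_def qff_def nnc_def by simp

lemma mtrace_add: "A \<in> carrier_mat n n \<Longrightarrow> B \<in> carrier_mat n n \<Longrightarrow> mtrace (A + B) = mtrace A + mtrace B"
  unfolding mtrace_def by (simp add: sum.distrib)

lemma mtrace_add_left: "A \<in> carrier_mat n n \<Longrightarrow> B \<in> carrier_mat n n \<Longrightarrow> C \<in> carrier_mat n n \<Longrightarrow>
   mtrace ((A + B) * C) = mtrace (A * C) + mtrace (B * C)"
  by (simp add: add_mult_distrib_mat mtrace_add[of _ n])

lemma mtrace_one_mult: "C \<in> carrier_mat n n \<Longrightarrow> mtrace (1\<^sub>m n * C) = mtrace C"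
  by simp

lemma kron_add_left: "A \<in> carrier_mat m m \<Longrightarrow> B \<in> carrier_mat m m \<Longrightarrow> kron (A + B) C = kron A C + kron B C"
proof (rule eq_matI)
  fix i j assume A: "A \<in> carrier_mat m m" and B: "B \<in> carrier_mat m m" and i: "i < dim_row (kron A C + kron B C)"
    and j: "j < dim_col (kron A C + kron B C)"
  have "i div dim_row C < m" "j div dim_col C < m" using i j A B by (simp_all add: less_mult_imp_div_less)
  thus "kron (A + B) C $$ (i, j) = (kron A C + kron B C) $$ (i, j)" using A B i j by (simp add: algebra_simps)
qed simp_all

lemma kron_add_right: "C \<in> carrier_mat m m \<Longrightarrow> D \<in> carrier_mat m m \<Longrightarrow> kron A (C + D) = kron A C + kron A D"
proof (rule eq_matI)
  fix i j assume C: "C \<in> carrier_mat m m" and D: "D \<in> carrier_mat m m" and i: "i < dim_row (kron A C + kron A D)"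
    and j: "j < dim_col (kron A C + kron A D)"
  have i': "i < dim_row A * m" using i D by simp
  have m: "m > 0" using i' by (cases m) auto
  have "i mod m < m" "j mod m < m" using m by simp_all
  thus "kron A (C + D) $$ (i, j) = (kron A C + kron A D) $$ (i, j)" using C D i j by (simp add: algebra_simps)
qed simp_all

lemma kron_one: "kron (1\<^sub>m m) (1\<^sub>m n) = 1\<^sub>m (m*n)"
proof (rule eq_matI)
  fix i j assume i: "i < dim_row (1\<^sub>m (m*n))" and j: "j < dim_col (1\<^sub>m (m * n))"
  have i': "i < m * n" and j': "j < m * n" using i j by simp_all
  have n0: "n > 0" using i' by (cases n) auto
  have a: "i div n < m" "j div n < m" using i' j' by (simp_all add: less_mult_imp_div_less)
  have b: "i mod n < n" "j mod n < n" using n0 by simp_all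
  have c: "i = j" if "i div n = j div n" "i mod n = j mod n"
  proof -
    have "i = i div n * n + i mod n" by simp
    also have "\<dots> = j div n * n + j mod n" using that by simp
    also have "\<dots> = j" by simp
    finally show ?thesis .
  qed
  have "kron (1\<^sub>m m) (1\<^sub>m n) $$ (i, j) = (if i div n = j div n then 1 else 0) * (if i mod n = j mod n then 1 else 0)"
    using i' j' a b by simp
  also have "\<dots> = (if i = j then 1 else 0)" using c by auto
  also have "\<dots> = 1\<^sub>m (m * n) $$ (i, j)" using i' j' by simp
  finally show "kron (1\<^sub>m m) (1\<^sub>m n) $$ (i, j) = 1\<^sub>m (m * n) $$ (i, j)" .
qed simp_all

lemma neg1_sq: "((-1::complex)^a) * (-1)^a = 1"
  by (simp add: power_mult_distrib[symmetric])

lemma sigma_x_carrier: "sigma_x \<in> carrier_mat 2 2"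
  unfolding sigma_x_def mat_of_rows_list_def carrier_mat_def by simp

lemma sigma_y_carrier: "sigma_y \<in> carrier_mat 2 2"
  unfolding sigma_y_def mat_of_rows_list_def carrier_mat_def by simp

lemma alice_obs_carrier: "alice_obs x \<in> carrier_mat 2 2"
  unfolding alice_obs_def using sigma_x_carrier sigma_y_carrier by simp

lemma obs_entries:
  "alice_obs x $$ (0,0) = 0" "alice_obs x $$ (1,1) = 0"
  "alice_obs x $$ (0,1) = (if x = 0 then 1 else - \<i>)" "alice_obs x $$ (1,0) = (if x = 0 then 1 else \<i>)"
  "alice_obs x $$ (Suc 0, Suc 0) = 0"
  "alice_obs x $$ (0,Suc 0) = (if x = 0 then 1 else - \<i>)" "alice_obs x $$ (Suc 0,0) = (if x = 0 then 1 else \<i>)"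
  by (simp_all add: alice_obs_def sigma_x_def sigma_y_def mat_of_rows_list_def)

lemma cnj_neg1_pow: "cnj ((-1::complex)^a) = (-1)^a" by simp

lemma alice_proj_rk1:
  "alice_proj a x = rk1 2 (1/2) (\<lambda>i. if i = 0 then 1 else (-1)^a * (if x = 0 then 1 else \<i>))"
proof (rule eq_matI)
  have o: "dim_row (alice_obs x) = 2" "dim_col (alice_obs x) = 2" using alice_obs_carrier[of x] by auto
  fix i j assume "i < dim_row (rk1 2 (1/2) (\<lambda>i. if i = 0 then 1 else (-1)^a * (if x = 0 then 1 else \<i>)))"
     "j < dim_col (rk1 2 (1/2) (\<lambda>i. if i = 0 then 1 else (-1)^a * (if x = 0 then 1 else \<i>)))"
  hence "i < 2" "j < 2" by (simp_all add: rk1_def)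
  hence ij: "i = 0 \<or> i = 1" "j = 0 \<or> j = 1" by auto
  have L: "alice_proj a x $$ (i, j) = 1/2 * (1\<^sub>m 2 $$ (i,j) + (-1)^a * alice_obs x $$ (i,j))"
    unfolding alice_proj_def using ij o by auto
  have R: "rk1 2 (1/2) (\<lambda>i. if i = 0 then 1 else (-1)^a * (if x = 0 then 1 else \<i>)) $$ (i, j) =
     1/2 * (if i = 0 then 1 else (-1)^a * (if x = 0 then 1 else \<i>)) * cnj (if j = 0 then 1 else (-1)^a * (if x = 0 then 1 else \<i>))"
    using ij by auto
  define w :: complex where "w = (if x = 0 then 1 else \<i>)"
  have w1: "w * cnj w = 1" unfolding w_def by simp
  have w2: "cnj w = (if x = 0 then 1 else - \<i>)" unfolding w_def by simp
  have ss: "((-1::complex)^a) * (-1)^a = 1" by (rule neg1_sq)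
  have sw: "(-1)^a * w * cnj ((-1)^a * w) = 1"
  proof -
    have "(-1)^a * w * cnj ((-1)^a * w) = ((-1)^a * (-1)^a) * (w * cnj w)" by (simp only: complex_cnj_mult cnj_neg1_pow mult_ac)
    thus ?thesis using ss w1 by simp
  qed
  have key: "1/2 * (1\<^sub>m 2 $$ (i,j) + (-1)^a * alice_obs x $$ (i,j)) =
      1/2 * (if i = 0 then 1 else (-1)^a * w) * cnj (if j = 0 then 1 else (-1)^a * w)"
  proof -
    from ij show "1/2 * (1\<^sub>m 2 $$ (i,j) + (-1)^a * alice_obs x $$ (i,j)) =
      1/2 * (if i = 0 then 1 else (-1)^a * w) * cnj (if j = 0 then 1 else (-1)^a * w)"
    proof (elim disjE)
      assume "i = 0" "j = 0" thus ?thesis by (simp add: obs_entries)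
    next
      assume "i = 0" "j = 1" thus ?thesis by (simp add: obs_entries w2 cnj_neg1_pow)
    next
      assume "i = 1" "j = 0" thus ?thesis by (simp add: obs_entries w_def)
    next
      assume "i = 1" "j = 1" thus ?thesis using sw by (simp add: obs_entries mult.assoc)
    qed
  qed
  show "alice_proj a x $$ (i, j) = rk1 2 (1/2) (\<lambda>i. if i = 0 then 1 else (-1)^a * (if x = 0 then 1 else \<i>)) $$ (i, j)"
    using key unfolding L R w_def .
qed (simp_all add: alice_proj_def rk1_def alice_obs_carrier[THEN carrier_matD(1)] alice_obs_carrier[THEN carrier_matD(2)])

lemma alice_proj_psd: "psd 2 (alice_proj a x)"
proof -
  have "psd 2 (rk1 2 (1/2) (\<lambda>i. if i = 0 then 1 else (-1)^a * (if x = 0 then 1 else \<i>)))"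
    by (rule psd_rk1) simp
  thus ?thesis by (subst alice_proj_rk1)
qed

lemma alice_proj_carrier: "alice_proj a x \<in> carrier_mat 2 2"
  by (subst alice_proj_rk1) (rule rk1_carrier)

lemma half_sum: "(1/2::complex) * (p + q) + 1/2 * (p - q) = p" by (simp add: field_simps)

lemma alice_proj_sum: "alice_proj 0 x + alice_proj 1 x = 1\<^sub>m 2"
proof (rule eq_matI)
  have o: "dim_row (alice_obs x) = 2" "dim_col (alice_obs x) = 2" using alice_obs_carrier[of x] by auto
  fix i j assume "i < dim_row (1\<^sub>m 2 :: complex mat)" "j < dim_col (1\<^sub>m 2 :: complex mat)"
  hence ij: "i < 2" "j < 2" by auto
  have "(alice_proj 0 x + alice_proj 1 x) $$ (i, j) = 1/2 * (1\<^sub>m 2 $$ (i,j) + alice_obs x $$ (i,j)) + 1/2 * (1\<^sub>m 2 $$ (i,j) - alice_obs x $$ (i,j))"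
    unfolding alice_proj_def using ij o by simp
  also have "\<dots> = 1\<^sub>m 2 $$ (i,j)" by (rule half_sum)
  finally show "(alice_proj 0 x + alice_proj 1 x) $$ (i, j) = 1\<^sub>m 2 $$ (i, j)" .
next
  show "dim_row (alice_proj 0 x + alice_proj 1 x) = dim_row (1\<^sub>m 2 :: complex mat)"
    using alice_proj_carrier[of 1 x] by simp
  show "dim_col (alice_proj 0 x + alice_proj 1 x) = dim_col (1\<^sub>m 2 :: complex mat)"
    using alice_proj_carrier[of 1 x] by simp
qed

lemma mtrace_bisep_sum:
  fixes c1 c2 c3 :: "nat \<Rightarrow> complex"
  assumes K: "K \<in> carrier_mat D D"
    and T: "\<And>l. l < n \<Longrightarrow> T1 l \<in> carrier_mat D D \<and> T2 l \<in> carrier_mat D D \<and> T3 l \<in> carrier_mat D D"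
  shows "mtrace (K * mat D D (\<lambda>ij. \<Sum>l<n. c1 l * T1 l $$ ij + c2 l * T2 l $$ ij + c3 l * T3 l $$ ij)) =
    (\<Sum>l<n. c1 l * mtrace (K * T1 l) + c2 l * mtrace (K * T2 l) + c3 l * mtrace (K * T3 l))"
proof -
  let ?M = "mat D D (\<lambda>ij. \<Sum>l<n. c1 l * T1 l $$ ij + c2 l * T2 l $$ ij + c3 l * T3 l $$ ij)"
  have "mtrace (K * ?M) = pf D (ent K) (ent ?M)" by (rule mtrace_mult[OF K]) simp
  also have "\<dots> = (\<Sum>i<D. \<Sum>j<D. \<Sum>l<n. K $$ (i,j) * (c1 l * T1 l $$ (j,i) + c2 l * T2 l $$ (j,i) + c3 l * T3 l $$ (j,i)))"
    unfolding pf_def by (intro sum.cong refl) (simp add: sum_distrib_left)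
  also have "\<dots> = (\<Sum>i<D. \<Sum>l<n. \<Sum>j<D. K $$ (i,j) * (c1 l * T1 l $$ (j,i) + c2 l * T2 l $$ (j,i) + c3 l * T3 l $$ (j,i)))"
    by (rule sum.cong[OF refl], rule sum.swap)
  also have "\<dots> = (\<Sum>l<n. \<Sum>i<D. \<Sum>j<D. K $$ (i,j) * (c1 l * T1 l $$ (j,i) + c2 l * T2 l $$ (j,i) + c3 l * T3 l $$ (j,i)))"
    by (rule sum.swap)
  also have "\<dots> = (\<Sum>l<n. c1 l * pf D (ent K) (ent (T1 l)) + c2 l * pf D (ent K) (ent (T2 l)) + c3 l * pf D (ent K) (ent (T3 l)))"
    unfolding pf_def by (simp add: sum.distrib sum_distrib_left algebra_simps)
  also have "\<dots> = (\<Sum>l<n. c1 l * mtrace (K * T1 l) + c2 l * mtrace (K * T2 l) + c3 l * mtrace (K * T3 l))"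
    using T mtrace_mult[OF K] by (intro sum.cong refl) simp
  finally show ?thesis .
qed

lemma norm1:
  assumes "A0 \<in> carrier_mat n n" "A1 \<in> carrier_mat n n" "A0 + A1 = 1\<^sub>m n" "R \<in> carrier_mat n n" "mtrace R = 1"
  shows "mtrace (A0 * R) + mtrace (A1 * R) = 1"
  using mtrace_add_left[OF assms(1,2,4)] assms by simp

lemma norm2:
  assumes A: "A0 \<in> carrier_mat m m" "A1 \<in> carrier_mat m m" "A0 + A1 = 1\<^sub>m m"
    and B: "B0 \<in> carrier_mat n n" "B1 \<in> carrier_mat n n" "B0 + B1 = 1\<^sub>m n"
    and R: "R \<in> carrier_mat (m*n) (m*n)" "mtrace R = 1"
  shows "mtrace (kron A0 B0 * R) + mtrace (kron A0 B1 * R) + mtrace (kron A1 B0 * R) + mtrace (kron A1 B1 * R) = 1"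
proof -
  have c: "kron X Y \<in> carrier_mat (m*n) (m*n)" if "X \<in> carrier_mat m m" "Y \<in> carrier_mat n n" for X Y
    using kron_carrier[OF that] .
  have "mtrace (kron A0 B0 * R) + mtrace (kron A0 B1 * R) = mtrace (kron A0 (1\<^sub>m n) * R)"
    using mtrace_add_left[OF c[OF A(1) B(1)] c[OF A(1) B(2)] R(1)] kron_add_right[OF B(1,2), of A0] B(3) by simp
  moreover have "mtrace (kron A1 B0 * R) + mtrace (kron A1 B1 * R) = mtrace (kron A1 (1\<^sub>m n) * R)"
    using mtrace_add_left[OF c[OF A(2) B(1)] c[OF A(2) B(2)] R(1)] kron_add_right[OF B(1,2), of A1] B(3) by simp
  moreover have "mtrace (kron A0 (1\<^sub>m n) * R) + mtrace (kron A1 (1\<^sub>m n) * R) = 1"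
  proof -
    have e: "kron A0 (1\<^sub>m n) + kron A1 (1\<^sub>m n) = 1\<^sub>m (m*n)"
      using kron_add_left[OF A(1,2), of "1\<^sub>m n"] A(3) kron_one by simp
    have "mtrace (kron A0 (1\<^sub>m n) * R) + mtrace (kron A1 (1\<^sub>m n) * R) = mtrace ((kron A0 (1\<^sub>m n) + kron A1 (1\<^sub>m n)) * R)"
      using mtrace_add_left[OF c[OF A(1) one_carrier_mat] c[OF A(2) one_carrier_mat] R(1)] by simp
    also have "\<dots> = mtrace R" unfolding e using R(1) by simp
    finally show ?thesis using R(2) by simp
  qed
  ultimately have "(mtrace (kron A0 B0 * R) + mtrace (kron A0 B1 * R)) + (mtrace (kron A1 B0 * R) + mtrace (kron A1 B1 * R)) = 1"
    by simp
  thus ?thesis by (simp add: add.assoc)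
qed

lemma nnc_re: "nnc z \<Longrightarrow> z = complex_of_real (Re z)"
  unfolding nnc_def by (simp add: complex_eq_iff)

lemma svs_SvF: "svs (SvF V) = 4 * sqrt 2 * V"
  unfolding svs_def SvF_def by (simp add: algebra_simps)


lemma density_psd: "density n \<rho> \<Longrightarrow> psd n \<rho>" by (simp add: density_def)
lemma density_carrier: "density n \<rho> \<Longrightarrow> \<rho> \<in> carrier_mat n n" by (simp add: density_def psd_def)
lemma density_tr: "density n \<rho> \<Longrightarrow> mtrace \<rho> = 1" by (simp add: density_def)
lemma psd_carrier: "psd n M \<Longrightarrow> M \<in> carrier_mat n n" by (simp add: psd_def)

lemma nnc_mult: "nnc u \<Longrightarrow> nnc v \<Longrightarrow> u * v = complex_of_real (Re u * Re v)"
  by (metis nnc_re of_real_mult)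

lemma upper:
  assumes bm: "biseparable_model P"
  shows "svs P \<le> 4"
proof -
  obtain d \<rho> N N' where d1: "d \<ge> 1" and bs: "biseparable d \<rho>"
    and pN: "\<forall>y \<in> {0, 1}. povm2 d (N y)" and pN': "\<forall>z \<in> {0, 1}. povm2 d (N' z)"
    and eq: "\<forall>a \<in> {0, 1}. \<forall>b \<in> {0, 1}. \<forall>c \<in> {0, 1}. \<forall>x \<in> {0, 1}. \<forall>y \<in> {0, 1}. \<forall>z \<in> {0, 1}.
          complex_of_real (P a b c x y z) = mtrace (kron (kron (alice_proj a x) (N y b)) (N' z c) * \<rho>)"
    using bm unfolding biseparable_model_def by blast
  obtain n :: nat and p q r :: "nat \<Rightarrow> real" and \<rho>A \<rho>BC \<rho>AC \<rho>B \<rho>AB \<rho>C where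
    pos: "\<forall>l<n. p l \<ge> 0 \<and> q l \<ge> 0 \<and> r l \<ge> 0 \<and>
              density 2 (\<rho>A l) \<and> density (d * d) (\<rho>BC l) \<and>
              density (2 * d) (\<rho>AC l) \<and> density d (\<rho>B l) \<and>
              density (2 * d) (\<rho>AB l) \<and> density d (\<rho>C l)"
    and wsum: "(\<Sum>l<n. p l + q l + r l) = 1"
    and rho: "\<rho> = mat (2 * d * d) (2 * d * d) (\<lambda>ij.
              \<Sum>l<n. complex_of_real (p l) * kron (\<rho>A l) (\<rho>BC l) $$ ij
                    + complex_of_real (q l) * prod_AC_B d (\<rho>AC l) (\<rho>B l) $$ ij
                    + complex_of_real (r l) * kron (\<rho>AB l) (\<rho>C l) $$ ij)"
    using bs unfolding biseparable_def by blast
  have NP: "psd d (N y b)" if "y \<in> {0,1}" "b \<in> {0,1}" for y b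
    using pN that unfolding povm2_def by auto
  have N'P: "psd d (N' z c)" if "z \<in> {0,1}" "c \<in> {0,1}" for z c
    using pN' that unfolding povm2_def by auto
  have NC: "N y b \<in> carrier_mat d d" if "y \<in> {0,1}" "b \<in> {0,1}" for y b using psd_carrier[OF NP[OF that]] .
  have N'C: "N' z c \<in> carrier_mat d d" if "z \<in> {0,1}" "c \<in> {0,1}" for z c using psd_carrier[OF N'P[OF that]] .
  have Nsum: "N y 0 + N y 1 = 1\<^sub>m d" if "y \<in> {0,1}" for y using pN that unfolding povm2_def by auto
  have N'sum: "N' z 0 + N' z 1 = 1\<^sub>m d" if "z \<in> {0,1}" for z using pN' that unfolding povm2_def by auto
  note MP = alice_proj_psd and MC = alice_proj_carrier
  define fA where "fA l a x = Re (mtrace (alice_proj a x * \<rho>A l))" for l a x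
  define fBC where "fBC l b c y z = Re (mtrace (kron (N y b) (N' z c) * \<rho>BC l))" for l b c y z
  define fB where "fB l b y = Re (mtrace (N y b * \<rho>B l))" for l b y
  define fAC where "fAC l a c x z = Re (mtrace (kron (alice_proj a x) (N' z c) * \<rho>AC l))" for l a c x z
  define fC where "fC l c z = Re (mtrace (N' z c * \<rho>C l))" for l c z
  define fAB where "fAB l a b x y = Re (mtrace (kron (alice_proj a x) (N y b) * \<rho>AB l))" for l a b x y
  have Pexp: "P a b c x y z = (\<Sum>l<n. p l * (fA l a x * fBC l b c y z) + q l * (fB l b y * fAC l a c x z) + r l * (fC l c z * fAB l a b x y))"
    if abc: "a \<in> {0,1}" "b \<in> {0,1}" "c \<in> {0,1}" "x \<in> {0,1}" "y \<in> {0,1}" "z \<in> {0,1}" for a b c x y z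
  proof -
    define K where "K = kron (kron (alice_proj a x) (N y b)) (N' z c)"
    have KC: "K \<in> carrier_mat (2*d*d) (2*d*d)" unfolding K_def
      using kron_carrier[OF kron_carrier[OF MC NC[OF abc(5,2)]] N'C[OF abc(6,3)]] .
    have T: "kron (\<rho>A l) (\<rho>BC l) \<in> carrier_mat (2*d*d) (2*d*d) \<and> prod_AC_B d (\<rho>AC l) (\<rho>B l) \<in> carrier_mat (2*d*d) (2*d*d)
       \<and> kron (\<rho>AB l) (\<rho>C l) \<in> carrier_mat (2*d*d) (2*d*d)" if "l < n" for l
      using kron_carrier[OF density_carrier density_carrier, of 2 "\<rho>A l" "d*d" "\<rho>BC l"]
        kron_carrier[OF density_carrier density_carrier, of "2*d" "\<rho>AB l" d "\<rho>C l"] pos that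
      by (auto simp: prod_AC_B_def mult.assoc)
    have t1: "mtrace (K * kron (\<rho>A l) (\<rho>BC l)) = complex_of_real (fA l a x * fBC l b c y z)" if l: "l < n" for l
    proof -
      have A: "density 2 (\<rho>A l)" and BC: "density (d*d) (\<rho>BC l)" using pos l by auto
      have "mtrace (K * kron (\<rho>A l) (\<rho>BC l)) = mtrace (kron (alice_proj a x) (kron (N y b) (N' z c)) * kron (\<rho>A l) (\<rho>BC l))"
        unfolding K_def kron_assoc ..
      also have "\<dots> = mtrace (alice_proj a x * \<rho>A l) * mtrace (kron (N y b) (N' z c) * \<rho>BC l)"
        by (rule kron_trace[OF MC density_carrier[OF A] kron_carrier[OF NC[OF abc(5,2)] N'C[OF abc(6,3)]] density_carrier[OF BC]])
      also have "\<dots> = complex_of_real (fA l a x * fBC l b c y z)" unfolding fA_def fBC_def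
        by (rule nnc_mult[OF trace_nonneg[OF MP density_psd[OF A]] trace_nonneg[OF kron_psd[OF NP[OF abc(5,2)] N'P[OF abc(6,3)]] density_psd[OF BC]]])
      finally show ?thesis .
    qed
    have t2: "mtrace (K * prod_AC_B d (\<rho>AC l) (\<rho>B l)) = complex_of_real (fB l b y * fAC l a c x z)" if l: "l < n" for l
    proof -
      have AC: "density (2*d) (\<rho>AC l)" and B: "density d (\<rho>B l)" using pos l by auto
      have "mtrace (K * prod_AC_B d (\<rho>AC l) (\<rho>B l)) = mtrace (kron (alice_proj a x) (N' z c) * \<rho>AC l) * mtrace (N y b * \<rho>B l)"
        unfolding K_def by (rule prod_trace[OF MC NC[OF abc(5,2)] N'C[OF abc(6,3)] density_carrier[OF AC] density_carrier[OF B]])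
      also have "\<dots> = complex_of_real (fAC l a c x z * fB l b y)" unfolding fAC_def fB_def
        by (rule nnc_mult[OF trace_nonneg[OF kron_psd[OF MP N'P[OF abc(6,3)]] density_psd[OF AC]] trace_nonneg[OF NP[OF abc(5,2)] density_psd[OF B]]])
      finally show ?thesis by (simp add: mult.commute)
    qed
    have t3: "mtrace (K * kron (\<rho>AB l) (\<rho>C l)) = complex_of_real (fC l c z * fAB l a b x y)" if l: "l < n" for l
    proof -
      have AB: "density (2*d) (\<rho>AB l)" and C: "density d (\<rho>C l)" using pos l by auto
      have "mtrace (K * kron (\<rho>AB l) (\<rho>C l)) = mtrace (kron (alice_proj a x) (N y b) * \<rho>AB l) * mtrace (N' z c * \<rho>C l)"
        unfolding K_def by (rule kron_trace[OF kron_carrier[OF MC NC[OF abc(5,2)]] density_carrier[OF AB] N'C[OF abc(6,3)] density_carrier[OF C]])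
      also have "\<dots> = complex_of_real (fAB l a b x y * fC l c z)" unfolding fAB_def fC_def
        by (rule nnc_mult[OF trace_nonneg[OF kron_psd[OF MP NP[OF abc(5,2)]] density_psd[OF AB]] trace_nonneg[OF N'P[OF abc(6,3)] density_psd[OF C]]])
      finally show ?thesis by (simp add: mult.commute)
    qed
    have "complex_of_real (P a b c x y z) = mtrace (K * \<rho>)" using eq abc unfolding K_def by blast
    also have "\<dots> = (\<Sum>l<n. complex_of_real (p l) * mtrace (K * kron (\<rho>A l) (\<rho>BC l))
          + complex_of_real (q l) * mtrace (K * prod_AC_B d (\<rho>AC l) (\<rho>B l))
          + complex_of_real (r l) * mtrace (K * kron (\<rho>AB l) (\<rho>C l)))"
      unfolding rho by (rule mtrace_bisep_sum[OF KC T])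
    also have "\<dots> = (\<Sum>l<n. complex_of_real (p l * (fA l a x * fBC l b c y z) + q l * (fB l b y * fAC l a c x z) + r l * (fC l c z * fAB l a b x y)))"
      using t1 t2 t3 by (intro sum.cong refl) simp
    also have "\<dots> = complex_of_real (\<Sum>l<n. p l * (fA l a x * fBC l b c y z) + q l * (fB l b y * fAC l a c x z) + r l * (fC l c z * fAB l a b x y))"
      by simp
    finally show ?thesis by (simp only: of_real_eq_iff)
  qed
  have "svs P = svs (\<lambda>a b c x y z. \<Sum>l<n. p l * (fA l a x * fBC l b c y z) + q l * (fB l b y * fAC l a c x z) + r l * (fC l c z * fAB l a b x y))"
    by (rule svs_cong) (rule Pexp)
  also have "\<dots> = (\<Sum>l<n. svs (\<lambda>a b c x y z. p l * (fA l a x * fBC l b c y z) + q l * (fB l b y * fAC l a c x z) + r l * (fC l c z * fAB l a b x y)))"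
    by (rule svs_sum)
  also have "\<dots> = (\<Sum>l<n. p l * svs (\<lambda>a b c x y z. fA l a x * fBC l b c y z) + q l * svs (\<lambda>a b c x y z. fB l b y * fAC l a c x z)
       + r l * svs (\<lambda>a b c x y z. fC l c z * fAB l a b x y))"
    by (intro sum.cong refl) (rule svs_lin3)
  also have "\<dots> \<le> (\<Sum>l<n. p l * 4 + q l * 4 + r l * 4)"
  proof (rule sum_mono)
    fix l assume "l \<in> {..<n}"
    hence l: "l < n" by simp
    have A: "density 2 (\<rho>A l)" and BC: "density (d*d) (\<rho>BC l)" and AC: "density (2*d) (\<rho>AC l)" and B: "density d (\<rho>B l)"
      and AB: "density (2*d) (\<rho>AB l)" and C: "density d (\<rho>C l)" and pqr: "p l \<ge> 0" "q l \<ge> 0" "r l \<ge> 0" using pos l by auto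
    have nA: "fA l a x \<ge> 0" for a x unfolding fA_def using trace_nonneg[OF MP density_psd[OF A]] by (simp add: nnc_def)
    have reh: "Re u + Re v = 1" if "u + v = 1" for u v :: complex using arg_cong[where f=Re, OF that] by simp
    have reh2: "Re u + Re v + Re w + Re t = 1" if "u + v + w + t = 1" for u v w t :: complex using arg_cong[where f=Re, OF that] by simp
    have sA: "fA l 0 x + fA l 1 x = 1" for x unfolding fA_def
      by (rule reh, rule norm1[OF MC MC alice_proj_sum density_carrier[OF A] density_tr[OF A]])
    have nBC: "fBC l b c y z \<ge> 0" if "b \<in> {0,1}" "c \<in> {0,1}" "y \<in> {0,1}" "z \<in> {0,1}" for b c y z unfolding fBC_def
      using trace_nonneg[OF kron_psd[OF NP[OF that(3,1)] N'P[OF that(4,2)]] density_psd[OF BC]] by (simp add: nnc_def)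
    have sBC: "fBC l 0 0 y z + fBC l 0 1 y z + fBC l 1 0 y z + fBC l 1 1 y z = 1" if y: "y \<in> {0,1}" and z: "z \<in> {0,1}" for y z
      unfolding fBC_def
      by (rule reh2, rule norm2[OF NC[OF y, of 0] NC[OF y, of 1] Nsum[OF y] N'C[OF z, of 0] N'C[OF z, of 1] N'sum[OF z]
         density_carrier[OF BC] density_tr[OF BC]]) simp_all
    have nB: "fB l b y \<ge> 0" if "b \<in> {0,1}" "y \<in> {0,1}" for b y unfolding fB_def
      using trace_nonneg[OF NP[OF that(2,1)] density_psd[OF B]] by (simp add: nnc_def)
    have sB: "fB l 0 y + fB l 1 y = 1" if y: "y \<in> {0,1}" for y unfolding fB_def
      by (rule reh, rule norm1[OF NC[OF y, of 0] NC[OF y, of 1] Nsum[OF y] density_carrier[OF B] density_tr[OF B]]) simp_all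
    have nAC: "fAC l a c x z \<ge> 0" if "c \<in> {0,1}" "z \<in> {0,1}" for a c x z unfolding fAC_def
      using trace_nonneg[OF kron_psd[OF MP N'P[OF that(2,1)]] density_psd[OF AC]] by (simp add: nnc_def)
    have sAC: "fAC l 0 0 x z + fAC l 0 1 x z + fAC l 1 0 x z + fAC l 1 1 x z = 1" if z: "z \<in> {0,1}" for x z
      unfolding fAC_def
      by (rule reh2, rule norm2[OF MC MC alice_proj_sum N'C[OF z, of 0] N'C[OF z, of 1] N'sum[OF z] density_carrier[OF AC] density_tr[OF AC]]) simp_all
    have nC: "fC l c z \<ge> 0" if "c \<in> {0,1}" "z \<in> {0,1}" for c z unfolding fC_def
      using trace_nonneg[OF N'P[OF that(2,1)] density_psd[OF C]] by (simp add: nnc_def)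
    have sC: "fC l 0 z + fC l 1 z = 1" if z: "z \<in> {0,1}" for z unfolding fC_def
      by (rule reh, rule norm1[OF N'C[OF z, of 0] N'C[OF z, of 1] N'sum[OF z] density_carrier[OF C] density_tr[OF C]]) simp_all
    have nAB: "fAB l a b x y \<ge> 0" if "b \<in> {0,1}" "y \<in> {0,1}" for a b x y unfolding fAB_def
      using trace_nonneg[OF kron_psd[OF MP NP[OF that(2,1)]] density_psd[OF AB]] by (simp add: nnc_def)
    have sAB: "fAB l 0 0 x y + fAB l 0 1 x y + fAB l 1 0 x y + fAB l 1 1 x y = 1" if y: "y \<in> {0,1}" for x y
      unfolding fAB_def
      by (rule reh2, rule norm2[OF MC MC alice_proj_sum NC[OF y, of 0] NC[OF y, of 1] Nsum[OF y] density_carrier[OF AB] density_tr[OF AB]]) simp_all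
    have "svs (\<lambda>a b c x y z. fA l a x * fBC l b c y z) \<le> 4"
      by (rule svs_A) (rule nA sA nBC sBC; assumption)+
    moreover have "svs (\<lambda>a b c x y z. fB l b y * fAC l a c x z) \<le> 4"
      by (rule svs_B) (rule nB sB nAC sAC; assumption)+
    moreover have "svs (\<lambda>a b c x y z. fC l c z * fAB l a b x y) \<le> 4"
      by (rule svs_C) (rule nC sC nAB sAB; assumption)+
    ultimately show "p l * svs (\<lambda>a b c x y z. fA l a x * fBC l b c y z) + q l * svs (\<lambda>a b c x y z. fB l b y * fAC l a c x z)
       + r l * svs (\<lambda>a b c x y z. fC l c z * fAB l a b x y) \<le> p l * 4 + q l * 4 + r l * 4"
      using pqr by (intro add_mono mult_left_mono) auto
  qed
  also have "\<dots> = 4 * (\<Sum>l<n. p l + q l + r l)" by (simp add: sum_distrib_left algebra_simps)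
  also have "\<dots> = 4" using wsum by simp
  finally show ?thesis .
qed

definition ev :: "nat \<Rightarrow> nat \<Rightarrow> complex" where "ev k = (\<lambda>i. if i = k then 1 else 0)"

lemma mtrace_rk1: "mtrace (rk1 n c u) = complex_of_real c * (\<Sum>i<n. u i * cnj (u i))"
  unfolding mtrace_def by (simp add: rk1_def sum_distrib_left mult.assoc)

lemma mtrace_mult_rk1: "K \<in> carrier_mat n n \<Longrightarrow> mtrace (K * rk1 n c u) = complex_of_real c * qff n (ent K) u"
  by (simp add: mtrace_mult pf_def qff_def sum_distrib_left algebra_simps)

lemma sum_two:
  fixes f :: "nat \<Rightarrow> complex"
  assumes "p < n" "q < n" "p \<noteq> q" "\<And>i. i \<noteq> p \<Longrightarrow> i \<noteq> q \<Longrightarrow> f i = 0"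
  shows "(\<Sum>i<n. f i) = f p + f q"
proof -
  have "(\<Sum>i<n. f i) = (\<Sum>i\<in>{p,q}. f i)"
    by (rule sum.mono_neutral_right) (use assms in auto)
  thus ?thesis using assms(3) by simp
qed

lemma sum_one:
  fixes f :: "nat \<Rightarrow> complex"
  assumes "p < n" "\<And>i. i \<noteq> p \<Longrightarrow> f i = 0"
  shows "(\<Sum>i<n. f i) = f p"
proof -
  have "(\<Sum>i<n. f i) = (\<Sum>i\<in>{p}. f i)"
    by (rule sum.mono_neutral_right) (use assms in auto)
  thus ?thesis by simp
qed

lemma qff_unit: "k < n \<Longrightarrow> qff n G (ev k) = G k k"
  unfolding qff_def ev_def
  by (subst sum_one[of k]) (auto simp: sum_one[of k])

lemma qff_two:
  assumes "p < n" "q < n" "p \<noteq> q" "\<And>i. i \<noteq> p \<Longrightarrow> i \<noteq> q \<Longrightarrow> u i = 0"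
  shows "qff n G u = cnj (u p) * G p p * u p + cnj (u p) * G p q * u q + cnj (u q) * G q p * u p + cnj (u q) * G q q * u q"
proof -
  have inner: "(\<Sum>j<n. cnj (u i) * G i j * u j) = cnj (u i) * G i p * u p + cnj (u i) * G i q * u q" for i
    by (rule sum_two) (use assms in auto)
  have "qff n G u = (\<Sum>i<n. cnj (u i) * G i p * u p + cnj (u i) * G i q * u q)"
    unfolding qff_def inner ..
  also have "\<dots> = (cnj (u p) * G p p * u p + cnj (u p) * G p q * u q) + (cnj (u q) * G q p * u p + cnj (u q) * G q q * u q)"
    by (rule sum_two) (use assms in auto)
  finally show ?thesis by (simp add: add.assoc)
qed

lemma diag_psd:
  assumes "\<And>i. i < n \<Longrightarrow> f i \<ge> 0"
  shows "psd n (mat n n (\<lambda>(i,j). if i = j then complex_of_real (f i) else 0))"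
  unfolding psd_iff psdf_def
proof (intro conjI allI)
  show "mat n n (\<lambda>(i,j). if i = j then complex_of_real (f i) else 0) \<in> carrier_mat n n" by simp
  fix v
  have "qff n (ent (mat n n (\<lambda>(i,j). if i = j then complex_of_real (f i) else 0))) v =
      (\<Sum>i<n. \<Sum>j<n. if j = i then cnj (v i) * complex_of_real (f i) * v i else 0)"
    unfolding qff_def by (intro sum.cong refl) auto
  also have "\<dots> = (\<Sum>i<n. complex_of_real (f i * ((Re (v i))\<^sup>2 + (Im (v i))\<^sup>2)))"
  proof (intro sum.cong refl)
    fix i assume iin: "i \<in> {..<n}"
    have h: "v i * cnj (v i) = complex_of_real ((Re (v i))\<^sup>2 + (Im (v i))\<^sup>2)" by (rule complex_mult_cnj)
    have "cnj (v i) * complex_of_real (f i) * v i = complex_of_real (f i) * (v i * cnj (v i))" by (simp add: mult_ac)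
    also have "\<dots> = complex_of_real (f i * ((Re (v i))\<^sup>2 + (Im (v i))\<^sup>2))" by (simp only: h of_real_mult)
    finally show "(\<Sum>j<n. if j = i then cnj (v i) * complex_of_real (f i) * v i else 0) = complex_of_real (f i * ((Re (v i))\<^sup>2 + (Im (v i))\<^sup>2))"
      using iin by simp
  qed
  also have "\<dots> = complex_of_real (\<Sum>i<n. f i * ((Re (v i))\<^sup>2 + (Im (v i))\<^sup>2))" by simp
  finally have e: "qff n (ent (mat n n (\<lambda>(i,j). if i = j then complex_of_real (f i) else 0))) v = complex_of_real (\<Sum>i<n. f i * ((Re (v i))\<^sup>2 + (Im (v i))\<^sup>2))" .
  have "0 \<le> (\<Sum>i<n. f i * ((Re (v i))\<^sup>2 + (Im (v i))\<^sup>2))"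
    by (rule sum_nonneg) (use assms in auto)
  thus "nnc (qff n (ent (mat n n (\<lambda>(i,j). if i = j then complex_of_real (f i) else 0))) v)"
    unfolding e nnc_def by simp
qed

definition bobbit :: "nat \<Rightarrow> nat \<Rightarrow> nat" where
  "bobbit k y = (if k = 0 then 0 else if k = 1 then 1 else if k = 2 then y else 1 - y)"
definition NB :: "nat \<Rightarrow> nat \<Rightarrow> complex mat" where
  "NB y b = mat 4 4 (\<lambda>(i,j). if i = j then complex_of_real (if bobbit i y = b then 1 else 0) else 0)"
definition om :: "nat \<Rightarrow> complex" where "om z = (if z = 0 then 1 else \<i>)"
definition uC :: "nat \<Rightarrow> nat \<Rightarrow> nat \<Rightarrow> complex" where
  "uC z c i = (if i = 0 then 1 else if i = 1 then (-1)^c * om z else 0)"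
definition NCm :: "nat \<Rightarrow> nat \<Rightarrow> complex mat" where
  "NCm z c = rk1 4 (1/2) (uC z c) + (if c = 0 then rk1 4 1 (ev 2) + rk1 4 1 (ev 3) else 0\<^sub>m 4 4)"
definition wl :: "nat \<Rightarrow> complex" where
  "wl l = (if l = 0 then 1 else if l = 1 then -1 else if l = 2 then \<i> else if l = 3 then -\<i> else if l = 4 then 1 else if l = 5 then 1 else -1)"
definition kl :: "nat \<Rightarrow> nat" where "kl l = (if l < 4 then l else if l = 4 \<or> l = 6 then 0 else 1)"
definition psi :: "nat \<Rightarrow> nat \<Rightarrow> complex" where "psi l i = (if i = 0 then 1 else if i = 5 then wl l else 0)"
definition qw :: "real \<Rightarrow> nat \<Rightarrow> real" where "qw t l = (if l < 4 then t / 4 else (1 - t) / 4)"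

lemma rk1_dims[simp]: "dim_row (rk1 n c u) = n" "dim_col (rk1 n c u) = n" by (simp_all add: rk1_def)
lemma NCm_dims[simp]: "dim_row (NCm z c) = 4" "dim_col (NCm z c) = 4" by (simp_all add: NCm_def)

lemma NB_carrier: "NB y b \<in> carrier_mat 4 4" by (simp add: NB_def)
lemma NB_psd: "psd 4 (NB y b)" unfolding NB_def by (rule diag_psd) simp

lemma NB_sum: "y \<in> {0,1} \<Longrightarrow> NB y 0 + NB y 1 = 1\<^sub>m 4"
  by (rule eq_matI) (auto simp: NB_def bobbit_def)

lemma NCm_carrier: "NCm z c \<in> carrier_mat 4 4" by (simp add: NCm_def)
lemma NCm_psd: "psd 4 (NCm z c)"
  unfolding NCm_def
  by (rule psd_add) (auto intro!: psd_rk1 psd_add psd_zero)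

lemma om_norm: "om z * cnj (om z) = 1" by (simp add: om_def)

lemma NCm_sum: "NCm z 0 + NCm z 1 = 1\<^sub>m 4"
proof (rule eq_matI)
  fix i j assume "i < dim_row (1\<^sub>m 4 :: complex mat)" "j < dim_col (1\<^sub>m 4 :: complex mat)"
  hence "i < 4" "j < 4" by auto
  hence "i \<in> {0,1,2,3}" "j \<in> {0,1,2,3}" by auto
  thus "(NCm z 0 + NCm z 1) $$ (i, j) = 1\<^sub>m 4 $$ (i, j)"
    by (auto simp: NCm_def uC_def ev_def om_norm)
qed (simp_all add: NCm_def)

lemma NCm_idx: "i < 2 \<Longrightarrow> j < 2 \<Longrightarrow> NCm z c $$ (i,j) = 1/2 * uC z c i * cnj (uC z c j)"
  by (auto simp: NCm_def ev_def)

lemma TB: "k < 4 \<Longrightarrow> mtrace (NB y b * rk1 4 1 (ev k)) = (if bobbit k y = b then 1 else 0)"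
  by (simp add: mtrace_mult_rk1[OF NB_carrier] qff_unit) (simp add: NB_def)

definition vA :: "nat \<Rightarrow> nat \<Rightarrow> nat \<Rightarrow> complex" where
  "vA a x i = (if i = 0 then 1 else (-1)^a * om x)"

lemma alice_idx: "i < 2 \<Longrightarrow> j < 2 \<Longrightarrow> alice_proj a x $$ (i,j) = 1/2 * vA a x i * cnj (vA a x j)"
  by (subst alice_proj_rk1) (simp add: vA_def om_def)

lemma TAC: "mtrace (kron (alice_proj a x) (NCm z c) * rk1 (2*4) (1/2) (psi l)) =
   1/2 * ((1/2 * vA a x 0 * cnj (vA a x 0)) * (1/2 * uC z c 0 * cnj (uC z c 0))
        + (1/2 * vA a x 0 * cnj (vA a x 1)) * (1/2 * uC z c 0 * cnj (uC z c 1)) * wl l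
        + cnj (wl l) * ((1/2 * vA a x 1 * cnj (vA a x 0)) * (1/2 * uC z c 1 * cnj (uC z c 0)))
        + cnj (wl l) * ((1/2 * vA a x 1 * cnj (vA a x 1)) * (1/2 * uC z c 1 * cnj (uC z c 1))) * wl l)"
proof -
  have KC: "kron (alice_proj a x) (NCm z c) \<in> carrier_mat 8 8"
    using kron_carrier[OF alice_proj_carrier NCm_carrier, of a x z c] by simp
  have dims: "dim_row (alice_proj a x) = 2" "dim_col (alice_proj a x) = 2" "dim_row (NCm z c) = 4" "dim_col (NCm z c) = 4"
    using alice_proj_carrier[of a x] by auto
  have "mtrace (kron (alice_proj a x) (NCm z c) * rk1 (2*4) (1/2) (psi l)) = 1/2 * qff (2*4) (ent (kron (alice_proj a x) (NCm z c))) (psi l)"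
    using mtrace_mult_rk1[OF KC] by simp
  also have "qff (2*4) (ent (kron (alice_proj a x) (NCm z c))) (psi l) =
     cnj (psi l 0) * kron (alice_proj a x) (NCm z c) $$ (0,0) * psi l 0 + cnj (psi l 0) * kron (alice_proj a x) (NCm z c) $$ (0,5) * psi l 5
     + cnj (psi l 5) * kron (alice_proj a x) (NCm z c) $$ (5,0) * psi l 0 + cnj (psi l 5) * kron (alice_proj a x) (NCm z c) $$ (5,5) * psi l 5"
    by (rule qff_two) (auto simp: psi_def)
  finally have eq: "mtrace (kron (alice_proj a x) (NCm z c) * rk1 (2*4) (1/2) (psi l)) = 1 / 2 *
    (cnj (psi l 0) * kron (alice_proj a x) (NCm z c) $$ (0, 0) * psi l 0 +
     cnj (psi l 0) * kron (alice_proj a x) (NCm z c) $$ (0, 5) * psi l 5 +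
     cnj (psi l 5) * kron (alice_proj a x) (NCm z c) $$ (5, 0) * psi l 0 +
     cnj (psi l 5) * kron (alice_proj a x) (NCm z c) $$ (5, 5) * psi l 5)" .
  have p: "psi l 0 = 1" "psi l 5 = wl l" by (simp_all add: psi_def)
  show ?thesis unfolding eq p
    by (simp add: dims alice_idx NCm_idx)
qed

lemma sum8: "(\<Sum>l<(8::nat). f l) = f 0 + f 1 + f 2 + f 3 + f 4 + f 5 + f 6 + (f 7 :: complex)"
  by (simp add: eval_nat_numeral)

definition TACf :: "nat \<Rightarrow> nat \<Rightarrow> nat \<Rightarrow> nat \<Rightarrow> nat \<Rightarrow> complex" where
 "TACf a c x z l = 1/2 * ((1/2 * vA a x 0 * cnj (vA a x 0)) * (1/2 * uC z c 0 * cnj (uC z c 0))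
        + (1/2 * vA a x 0 * cnj (vA a x 1)) * (1/2 * uC z c 0 * cnj (uC z c 1)) * wl l
        + cnj (wl l) * ((1/2 * vA a x 1 * cnj (vA a x 0)) * (1/2 * uC z c 1 * cnj (uC z c 0)))
        + cnj (wl l) * ((1/2 * vA a x 1 * cnj (vA a x 1)) * (1/2 * uC z c 1 * cnj (uC z c 1))) * wl l)"

lemma numeric:
  assumes "a \<in> {0,1}" "b \<in> {0,1}" "c \<in> {0,1}" "x \<in> {0,1}" "y \<in> {0,1}" "z \<in> {0,1}"
  shows "complex_of_real ((2 + (-1)^(a+b+c+x*y+y*z+x*z) * t)/16) =
    (\<Sum>l<8. complex_of_real (qw t l) * (TACf a c x z l * (if bobbit (kl l) y = b then 1 else 0)))"
  using assms unfolding sum8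
  by (auto simp: TACf_def qw_def wl_def kl_def bobbit_def vA_def uC_def om_def field_simps)

lemma sum8r: "(\<Sum>l<(8::nat). f l) = f 0 + f 1 + f 2 + f 3 + f 4 + f 5 + f 6 + (f 7 :: real)"
  by (simp add: eval_nat_numeral)

lemma density_ev: "k < n \<Longrightarrow> density n (rk1 n 1 (ev k))"
  unfolding density_def
proof (intro conjI)
  assume k: "k < n"
  show "psd n (rk1 n 1 (ev k))" by (rule psd_rk1) simp
  have "(\<Sum>i<n. ev k i * cnj (ev k i)) = ev k k * cnj (ev k k)"
    by (rule sum_one[OF k]) (simp add: ev_def)
  thus "mtrace (rk1 n 1 (ev k)) = 1" unfolding mtrace_rk1 by (simp add: ev_def)
qed

lemma wl_norm: "wl l * cnj (wl l) = 1" by (simp add: wl_def)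

lemma density_psi: "density 8 (rk1 8 (1/2) (psi l))"
  unfolding density_def
proof (intro conjI)
  show "psd 8 (rk1 8 (1/2) (psi l))" by (rule psd_rk1) simp
  have "(\<Sum>i<8. psi l i * cnj (psi l i)) = psi l 0 * cnj (psi l 0) + psi l 5 * cnj (psi l 5)"
    by (rule sum_two) (simp_all add: psi_def)
  thus "mtrace (rk1 8 (1/2) (psi l)) = 1" unfolding mtrace_rk1 by (simp add: psi_def wl_norm)
qed

lemma lower:
  assumes V0: "0 < V" and V1: "V \<le> 1 / sqrt 2"
  shows "biseparable_model (SvF V)"
proof -
  define t where "t = sqrt 2 * V"
  have t0: "0 \<le> t" unfolding t_def using V0 by simp
  have t1: "t \<le> 1" unfolding t_def using V1 by (simp add: field_simps)
  define \<rho> where "\<rho> = mat (2 * 4 * 4) (2 * 4 * 4) (\<lambda>ij.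
              \<Sum>l<(8::nat). complex_of_real ((\<lambda>_. 0) l) * kron ((\<lambda>_. rk1 2 1 (ev 0)) l) ((\<lambda>_. rk1 (4*4) 1 (ev 0)) l) $$ ij
                    + complex_of_real (qw t l) * prod_AC_B 4 ((\<lambda>l. rk1 (2*4) (1/2) (psi l)) l) ((\<lambda>l. rk1 4 1 (ev (kl l))) l) $$ ij
                    + complex_of_real ((\<lambda>_. 0) l) * kron ((\<lambda>_. rk1 (2*4) 1 (ev 0)) l) ((\<lambda>_. rk1 4 1 (ev 0)) l) $$ ij)"
  have kl4: "kl l < 4" for l by (simp add: kl_def)
  have bs: "biseparable 4 \<rho>"
    unfolding biseparable_def
    apply (rule exI[where x="8::nat"], rule exI[where x="\<lambda>_. 0"], rule exI[where x="qw t"], rule exI[where x="\<lambda>_. 0"],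
        rule exI[where x="\<lambda>_. rk1 2 1 (ev 0)"], rule exI[where x="\<lambda>_. rk1 (4*4) 1 (ev 0)"],
        rule exI[where x="\<lambda>l. rk1 (2*4) (1/2) (psi l)"], rule exI[where x="\<lambda>l. rk1 4 1 (ev (kl l))"],
        rule exI[where x="\<lambda>_. rk1 (2*4) 1 (ev 0)"], rule exI[where x="\<lambda>_. rk1 4 1 (ev 0)"])
  proof (intro conjI allI impI)
    fix l :: nat assume "l < 8"
    show "0 \<le> (0::real)" by simp
    show "0 \<le> (0::real)" by simp
    show "0 \<le> qw t l" unfolding qw_def using t0 t1 by simp
    show "density 2 (rk1 2 1 (ev 0))" by (rule density_ev) simp
    show "density (4 * 4) (rk1 (4 * 4) 1 (ev 0))" by (rule density_ev) simp
    show "density (2 * 4) (rk1 (2 * 4) (1 / 2) (psi l))" using density_psi by simp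
    show "density 4 (rk1 4 1 (ev (kl l)))" by (rule density_ev[OF kl4])
    show "density (2 * 4) (rk1 (2 * 4) 1 (ev 0))" by (rule density_ev) simp
    show "density 4 (rk1 4 1 (ev 0))" by (rule density_ev) simp
  next
    show "(\<Sum>l<8. 0 + qw t l + 0) = 1" unfolding sum8r by (simp add: qw_def field_simps)
  next
    show "\<rho> = mat (2 * 4 * 4) (2 * 4 * 4) (\<lambda>ij.
              \<Sum>l<(8::nat). complex_of_real ((\<lambda>_. 0) l) * kron ((\<lambda>_. rk1 2 1 (ev 0)) l) ((\<lambda>_. rk1 (4*4) 1 (ev 0)) l) $$ ij
                    + complex_of_real (qw t l) * prod_AC_B 4 ((\<lambda>l. rk1 (2*4) (1/2) (psi l)) l) ((\<lambda>l. rk1 4 1 (ev (kl l))) l) $$ ij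
                    + complex_of_real ((\<lambda>_. 0) l) * kron ((\<lambda>_. rk1 (2*4) 1 (ev 0)) l) ((\<lambda>_. rk1 4 1 (ev 0)) l) $$ ij)"
      by (rule \<rho>_def)
  qed
  have pN: "\<forall>y \<in> {0, 1}. povm2 4 (NB y)" unfolding povm2_def using NB_psd NB_sum by blast
  have pN': "\<forall>z \<in> {0, 1}. povm2 4 (NCm z)" unfolding povm2_def using NCm_psd NCm_sum by blast
  have eqs: "complex_of_real (SvF V a b c x y z) = mtrace (kron (kron (alice_proj a x) (NB y b)) (NCm z c) * \<rho>)"
    if abc: "a \<in> {0,1}" "b \<in> {0,1}" "c \<in> {0,1}" "x \<in> {0,1}" "y \<in> {0,1}" "z \<in> {0,1}" for a b c x y z
  proof -
    define K where "K = kron (kron (alice_proj a x) (NB y b)) (NCm z c)"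
    have KC: "K \<in> carrier_mat (2*4*4) (2*4*4)" unfolding K_def
      by (rule kron_carrier[OF kron_carrier[OF alice_proj_carrier NB_carrier] NCm_carrier])
    have T: "kron (rk1 2 1 (ev 0)) (rk1 (4*4) 1 (ev 0)) \<in> carrier_mat (2*4*4) (2*4*4) \<and>
        prod_AC_B 4 (rk1 (2*4) (1/2) (psi l)) (rk1 4 1 (ev (kl l))) \<in> carrier_mat (2*4*4) (2*4*4) \<and>
        kron (rk1 (2*4) 1 (ev 0)) (rk1 4 1 (ev 0)) \<in> carrier_mat (2*4*4) (2*4*4)" for l
    proof (intro conjI)
      show "kron (rk1 2 1 (ev 0)) (rk1 (4*4) 1 (ev 0)) \<in> carrier_mat (2*4*4) (2*4*4)"
        using kron_carrier[OF rk1_carrier rk1_carrier, of 2 1 "ev 0" "4*4" 1 "ev 0"] by (simp only: mult.assoc)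
      show "prod_AC_B 4 (rk1 (2*4) (1/2) (psi l)) (rk1 4 1 (ev (kl l))) \<in> carrier_mat (2*4*4) (2*4*4)"
        unfolding prod_AC_B_def by (rule mat_carrier)
      show "kron (rk1 (2*4) 1 (ev 0)) (rk1 4 1 (ev 0)) \<in> carrier_mat (2*4*4) (2*4*4)"
        by (rule kron_carrier[OF rk1_carrier rk1_carrier])
    qed
    have "mtrace (K * \<rho>) = (\<Sum>l<8. complex_of_real 0 * mtrace (K * kron (rk1 2 1 (ev 0)) (rk1 (4*4) 1 (ev 0)))
        + complex_of_real (qw t l) * mtrace (K * prod_AC_B 4 (rk1 (2*4) (1/2) (psi l)) (rk1 4 1 (ev (kl l))))
        + complex_of_real 0 * mtrace (K * kron (rk1 (2*4) 1 (ev 0)) (rk1 4 1 (ev 0))))"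
      unfolding \<rho>_def by (rule mtrace_bisep_sum[OF KC T])
    also have "\<dots> = (\<Sum>l<8. complex_of_real (qw t l) * (TACf a c x z l * (if bobbit (kl l) y = b then 1 else 0)))"
    proof (intro sum.cong refl)
      fix l
      have "mtrace (K * prod_AC_B 4 (rk1 (2*4) (1/2) (psi l)) (rk1 4 1 (ev (kl l)))) =
          mtrace (kron (alice_proj a x) (NCm z c) * rk1 (2*4) (1/2) (psi l)) * mtrace (NB y b * rk1 4 1 (ev (kl l)))"
        unfolding K_def by (rule prod_trace[OF alice_proj_carrier NB_carrier NCm_carrier]) simp_all
      also have "\<dots> = TACf a c x z l * (if bobbit (kl l) y = b then 1 else 0)"
        unfolding TAC TB[OF kl4] TACf_def ..
      finally show "complex_of_real 0 * mtrace (K * kron (rk1 2 1 (ev 0)) (rk1 (4*4) 1 (ev 0)))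
        + complex_of_real (qw t l) * mtrace (K * prod_AC_B 4 (rk1 (2*4) (1/2) (psi l)) (rk1 4 1 (ev (kl l))))
        + complex_of_real 0 * mtrace (K * kron (rk1 (2*4) 1 (ev 0)) (rk1 4 1 (ev 0))) =
        complex_of_real (qw t l) * (TACf a c x z l * (if bobbit (kl l) y = b then 1 else 0))" by simp
    qed
    also have "\<dots> = complex_of_real ((2 + (-1)^(a+b+c+x*y+y*z+x*z) * t)/16)"
      by (rule numeric[OF abc, symmetric])
    also have "\<dots> = complex_of_real (SvF V a b c x y z)" unfolding SvF_def t_def by (simp add: mult.assoc)
    finally show ?thesis unfolding K_def by simp
  qed
  show ?thesis unfolding biseparable_model_def
    apply (rule exI[where x="4::nat"], rule exI[where x=\<rho>], rule exI[where x=NB], rule exI[where x=NCm])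
    using bs pN pN' eqs by simp
qed

theorem proposition3:
  fixes V :: real
  assumes "0 < V" and "V \<le> 1"
  shows "genuine_tripartite_steering_2SDI (SvF V) \<longleftrightarrow> V > 1 / sqrt 2"
proof
  assume g: "genuine_tripartite_steering_2SDI (SvF V)"
  show "V > 1 / sqrt 2"
  proof (rule ccontr)
    assume "\<not> V > 1 / sqrt 2"
    hence "V \<le> 1 / sqrt 2" by simp
    hence "biseparable_model (SvF V)" using lower assms(1) by blast
    thus False using g unfolding genuine_tripartite_steering_2SDI_def by simp
  qed
next
  assume v: "V > 1 / sqrt 2"
  show "genuine_tripartite_steering_2SDI (SvF V)"
    unfolding genuine_tripartite_steering_2SDI_def
  proof
    assume "biseparable_model (SvF V)"
    hence "svs (SvF V) \<le> 4" by (rule upper)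
    hence "4 * sqrt 2 * V \<le> 4" unfolding svs_SvF .
    hence "sqrt 2 * V \<le> 1" by simp
    hence "V \<le> 1 / sqrt 2" by (simp add: field_simps)
    thus False using v by simp
  qed
qed

end
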